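(* Let $G\in\mathcal{G}$ and let $\ell_G$ be its Lévy-induced level function. Consider the following data structure, working in the random oracle model with a uniformly random hash function $H:[n]\to[0,1]$ (the values $H(v)$, $v\in[n]$, i.i.d. $\mathrm{Uniform}(0,1)$). Its only state is a pair $(v_*,h_* )\in([n]\cup\{\perp\})\times(\mathbb{R}_+\cup\{\infty\})$, initially $(\perp,\infty)$. A vector $\mathbf{x}\in\mathbb{R}_+^n$ is initially $0$ and undergoes a stream of updates $\textsf{Update}(v,\Delta)$ with $v\in[n]$, $\Delta>0$, meaning $\mathbf{x}(v)\gets\mathbf{x}(v)+\Delta$. On each update, the data structure draws a fresh $Y\sim\mathrm{Exp}(1)$ independent of everything else, computes $h=\ell_G(Y/\Delta,H(v))$, and if $h<h_*$ sets $(v_*,h_* )\gets(v,h)$. Then at all times, for every $v\in[n]$, \[ \mathbb{P}(v_*=v)=\frac{G(\mathbf{x}(v))}{G(\mathbf{x})},\qquad\text{where } G(\mathbf{x})=\sum_{u\in[n]}G(\mathbf{x}(u)), \] i.e., it is a truly perfect $G$-sampler with zero probability of failure, storing only the pair $(v_*,h_* )$.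
   Context: $\mathbb{R}_+$ is the set of non-negative reals; $\mathrm{Exp}(\lambda)$ is the exponential distribution with rate $\lambda$. The class $\mathcal{G}$ consists of all functions $G:\mathbb{R}_+\to\mathbb{R}_+$ of the form $G(z)=c\,\mathbf{1}[z>0]+\gamma_0 z+\int_{(0,\infty)}(1-e^{-rz})\,\nu(dr)$ with $c,\gamma_0\ge0$ and $\nu$ a non-negative measure on $(0,\infty)$ satisfying $\int_{(0,\infty)}\min\{r,1\}\nu(dr)<\infty$. By the Lévy–Khintchine representation, each $G\in\mathcal{G}$ corresponds to a non-negative (possibly killed, i.e. allowed to take the value $\infty$) Lévy process $(X_t)_{t\ge0}$ (stationary independent increments, $X_0=0$, stochastically continuous) with $\mathbb{E}e^{-zX_t}=e^{-tG(z)}$ for all $t,z\ge0$. The Lévy-induced level function $\ell_G:(0,\infty)\times(0,1)\to\mathbb{R}_+$ is $\ell_G(a,b)=\inf\{t\ge 0:\mathbb{P}(X_t\ge a)\ge b\}$. *)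

theory Defs
  imports "HOL-Probability.Probability"
begin

text \<open>The class of Laplace exponents G (Bernstein functions with killing term), given
  by the Levy-Khintchine form on the non-negative reals.\<close>
definition in_class_G :: "(real \<Rightarrow> real) \<Rightarrow> bool" where
  "in_class_G G \<longleftrightarrow>
     (\<exists>c \<gamma>0 (\<nu>::real measure).
        c \<ge> 0 \<and> \<gamma>0 \<ge> 0 \<and> sets \<nu> = sets borel \<and> emeasure \<nu> {..0} = 0 \<and>
        (\<integral>\<^sup>+ r. ennreal (min r 1) \<partial>\<nu>) < \<infinity> \<and>
        (\<forall>z\<ge>0. G z = c * (if z > 0 then 1 else 0) + \<gamma>0 * z
                       + (\<integral> r. (1 - exp (- (r * z))) \<partial>\<nu>)))"

text \<open>X is a (possibly killed, i.e. extended-valued) non-negative process on the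
  probability space M whose marginals have Laplace transform
  E exp(-z X_t) = exp(-t G(z)) (with exp(-z * infinity) = 0 for z > 0).\<close>
definition has_laplace_exponent ::
    "'w measure \<Rightarrow> (real \<Rightarrow> 'w \<Rightarrow> ennreal) \<Rightarrow> (real \<Rightarrow> real) \<Rightarrow> bool" where
  "has_laplace_exponent M X G \<longleftrightarrow>
     prob_space M \<and>
     (\<forall>t\<ge>0. X t \<in> borel_measurable M \<and>
        (\<forall>z>0. (\<integral>\<omega>. (if X t \<omega> = \<top> then 0 else exp (- (z * enn2real (X t \<omega>)))) \<partial>M)
               = exp (- (t * G z))))"

definition levy_level ::
    "'w measure \<Rightarrow> (real \<Rightarrow> 'w \<Rightarrow> ennreal) \<Rightarrow> real \<Rightarrow> real \<Rightarrow> ennreal" where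
  "levy_level M X a b =
     Inf (ennreal ` {t. 0 \<le> t \<and> measure M {\<omega> \<in> space M. ennreal a \<le> X t \<omega>} \<ge> b})"

text \<open>State of the sampler: (v_*, h_*) with v_* = None standing for bottom.\<close>
type_synonym ds_state = "nat option \<times> ennreal"

definition ds_init :: ds_state where
  "ds_init = (None, \<top>)"

definition ds_step ::
    "(real \<Rightarrow> real \<Rightarrow> ennreal) \<Rightarrow> (nat \<Rightarrow> real) \<Rightarrow> real \<Rightarrow> nat \<times> real \<Rightarrow> ds_state \<Rightarrow> ds_state" where
  "ds_step l H Y u s =
     (let h = l (Y / snd u) (H (fst u)) in if h < snd s then (Some (fst u), h) else s)"

text \<open>Running the stream of updates us; the i-th update (0-based) uses Y i.\<close>
definition ds_run ::
    "(real \<Rightarrow> real \<Rightarrow> ennreal) \<Rightarrow> (nat \<Rightarrow> real) \<Rightarrow> (nat \<Rightarrow> real) \<Rightarrow> (nat \<times> real) list \<Rightarrow> ds_state" where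
  "ds_run l H Y us = foldl (\<lambda>s (i, u). ds_step l H (Y i) u s) ds_init (List.enumerate 0 us)"

definition stream_vec :: "(nat \<times> real) list \<Rightarrow> nat \<Rightarrow> real" where
  "stream_vec us v = sum_list (map snd (filter (\<lambda>u. fst u = v) us))"

definition sampler_space :: "nat \<Rightarrow> nat \<Rightarrow> ((nat \<Rightarrow> real) \<times> (nat \<Rightarrow> real)) measure" where
  "sampler_space n m =
     (\<Pi>\<^sub>M v\<in>{..<n}. uniform_measure lborel {0..1}) \<Otimes>\<^sub>M
     (\<Pi>\<^sub>M i\<in>{..<m}. density lborel (exponential_density 1))"

end

theory Submission
  imports Defs
begin

lemma poly_moment_integral:
  fixes A :: "'a \<Rightarrow> real"
  assumes P: "prob_space P" and A: "A \<in> borel_measurable P"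
    and Ar: "\<And>x. x \<in> space P \<Longrightarrow> A x \<in> {0..1}"
  shows "(\<integral>x. (\<Sum>i\<le>N. c i * A x ^ i) \<partial>P) = (\<Sum>i\<le>N. c i * (\<integral>x. A x ^ i \<partial>P))"
proof -
  interpret prob_space P by fact
  have int: "integrable P (\<lambda>x. A x ^ i)" for i
  proof (rule integrable_const_bound[where B=1])
    show "AE x in P. norm (A x ^ i) \<le> 1" using Ar by (auto intro!: power_le_one)
  qed (use A in auto)
  have "(\<integral>x. (\<Sum>i\<le>N. c i * A x ^ i) \<partial>P) = (\<Sum>i\<le>N. (\<integral>x. c i * A x ^ i \<partial>P))"
    by (rule Bochner_Integration.integral_sum[where f="\<lambda>i x. c i * A x ^ i"]) (auto intro: int)
  then show ?thesis by simp
qed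

lemma moments_cont_eq:
  fixes A :: "'a \<Rightarrow> real" and B :: "'b \<Rightarrow> real" and f :: "real \<Rightarrow> real"
  assumes P: "prob_space P" and Q: "prob_space Q"
    and A: "A \<in> borel_measurable P" and B: "B \<in> borel_measurable Q"
    and Ar: "\<And>x. x \<in> space P \<Longrightarrow> A x \<in> {0..1}"
    and Br: "\<And>x. x \<in> space Q \<Longrightarrow> B x \<in> {0..1}"
    and mom: "\<And>k. (\<integral>x. A x ^ k \<partial>P) = (\<integral>x. B x ^ k \<partial>Q)"
    and f: "continuous_on UNIV f"
  shows "(\<integral>x. f (A x) \<partial>P) = (\<integral>x. f (B x) \<partial>Q)"
proof -
  interpret P: prob_space P by fact
  interpret Q: prob_space Q by fact
  have fm: "f \<in> borel_measurable borel" using f by (rule borel_measurable_continuous_onI)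
  have f01: "continuous_on {0..1} f" using f by (rule continuous_on_subset) auto
  have approx: "\<bar>(\<integral>x. f (A x) \<partial>P) - (\<integral>x. f (B x) \<partial>Q)\<bar> \<le> 2 * e" if e: "e > 0" for e
  proof -
    obtain g where g: "real_polynomial_function g" and ge: "\<And>x. x \<in> {0..1} \<Longrightarrow> \<bar>f x - g x\<bar> < e"
      using Stone_Weierstrass_real_polynomial_function[OF compact_Icc f01 e] by blast
    obtain c N where gc: "g = (\<lambda>x. \<Sum>i\<le>N. c i * x ^ i)"
      using g real_polynomial_function_iff_sum by blast
    have gA: "(\<integral>x. g (A x) \<partial>P) = (\<integral>x. g (B x) \<partial>Q)"
      unfolding gc
      by (simp add: poly_moment_integral[OF P A Ar] poly_moment_integral[OF Q B Br] mom)
    have gm: "g \<in> borel_measurable borel"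
      unfolding gc by measurable
    have bnd: "\<bar>(\<integral>x. f (C x) \<partial>R) - (\<integral>x. g (C x) \<partial>R)\<bar> \<le> e"
      if R: "prob_space R" and C: "C \<in> borel_measurable R" and Cr: "\<And>x. x \<in> space R \<Longrightarrow> C x \<in> {0..1}"
      for R :: "'c measure" and C
    proof -
      interpret R: prob_space R by fact
      have fC: "(\<lambda>x. f (C x)) \<in> borel_measurable R" using fm C by measurable
      have gC: "(\<lambda>x. g (C x)) \<in> borel_measurable R" using gm C by measurable
      obtain K where K: "\<And>x. x \<in> {0..1} \<Longrightarrow> \<bar>f x\<bar> \<le> K"
        using compact_continuous_image[OF f01 compact_Icc, THEN compact_imp_bounded]
        by (force simp: bounded_iff)
      have ifC: "integrable R (\<lambda>x. f (C x))"
        by (rule R.integrable_const_bound[where B=K]) (use K Cr fC in auto)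
      have igC: "integrable R (\<lambda>x. g (C x))"
      proof (rule R.integrable_const_bound[where B="K+e"])
        show "AE x in R. norm (g (C x)) \<le> K + e"
        proof (rule AE_I2)
          fix x assume "x \<in> space R"
          then have "C x \<in> {0..1}" by (rule Cr)
          then show "norm (g (C x)) \<le> K + e" using K[of "C x"] ge[of "C x"] by auto
        qed
      qed (use gC in auto)
      have "\<bar>(\<integral>x. f (C x) \<partial>R) - (\<integral>x. g (C x) \<partial>R)\<bar> = \<bar>\<integral>x. f (C x) - g (C x) \<partial>R\<bar>"
        using ifC igC by simp
      also have "\<dots> \<le> (\<integral>x. \<bar>f (C x) - g (C x)\<bar> \<partial>R)"
        by (rule integral_abs_bound)
      also have "\<dots> \<le> (\<integral>x. e \<partial>R)"
      proof (rule integral_mono)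
        show "integrable R (\<lambda>x. \<bar>f (C x) - g (C x)\<bar>)" using ifC igC by auto
        show "\<bar>f (C x) - g (C x)\<bar> \<le> e" if "x \<in> space R" for x
          using ge[OF Cr[OF that]] by simp
      qed auto
      also have "\<dots> = e" using R.prob_space by simp
      finally show ?thesis .
    qed
    from bnd[OF P A Ar] bnd[OF Q B Br] gA show ?thesis by linarith
  qed
  show ?thesis
  proof (rule ccontr)
    assume ne: "(\<integral>x. f (A x) \<partial>P) \<noteq> (\<integral>x. f (B x) \<partial>Q)"
    define d where "d = \<bar>(\<integral>x. f (A x) \<partial>P) - (\<integral>x. f (B x) \<partial>Q)\<bar>"
    have "d > 0" using ne by (simp add: d_def)
    with approx[of "d/4"] show False by (simp add: d_def)
  qed
qed

definition tfun :: "real \<Rightarrow> nat \<Rightarrow> real \<Rightarrow> real" where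
  "tfun c j y = max 0 (min 1 (1 - real (Suc j) * (y - c)))"

lemma tfun_cont: "continuous_on UNIV (tfun c j)"
  unfolding tfun_def by (intro continuous_intros)

lemma tfun_lim: "(\<lambda>j. tfun c j y) \<longlonglongrightarrow> indicator {..c} y"
proof (cases "y \<le> c")
  case True
  then have "tfun c j y = 1" for j
    unfolding tfun_def by (auto simp: mult_nonneg_nonpos max_def min_def)
  then show ?thesis using True by simp
next
  case False
  then have d: "y - c > 0" by simp
  obtain N :: nat where N: "1 / (y - c) < real N" using reals_Archimedean2 by blast
  have "eventually (\<lambda>j. tfun c j y = 0) sequentially"
  proof (rule eventually_sequentiallyI[of N])
    fix j assume "N \<le> j"
    then have "1 / (y - c) < real (Suc j)" using N by linarith
    then have "1 < real (Suc j) * (y - c)" using d by (simp add: field_simps)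
    then show "tfun c j y = 0" unfolding tfun_def by simp
  qed
  then have "(\<lambda>j. tfun c j y) \<longlonglongrightarrow> 0" by (rule tendsto_eventually)
  then show ?thesis using False by simp
qed

lemma tfun_bound: "norm (tfun c j y) \<le> 1"
  unfolding tfun_def by simp

lemma tfun_integral_lim:
  fixes C :: "'a \<Rightarrow> real"
  assumes R: "prob_space R" and C: "C \<in> borel_measurable R"
  shows "(\<lambda>j. \<integral>x. tfun c j (C x) \<partial>R) \<longlonglongrightarrow> measure R {x\<in>space R. C x \<le> c}"
proof -
  interpret R: prob_space R by fact
  have tm: "tfun c j \<in> borel_measurable borel" for j
    using tfun_cont by (rule borel_measurable_continuous_onI)
  have S: "{x\<in>space R. C x \<le> c} \<in> sets R" using C by measurable
  have "(\<lambda>j. \<integral>x. tfun c j (C x) \<partial>R) \<longlonglongrightarrow> (\<integral>x. indicator {x\<in>space R. C x \<le> c} x \<partial>R)"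
  proof (rule integral_dominated_convergence[where w="\<lambda>_. 1"])
    show "indicator {x\<in>space R. C x \<le> c} \<in> borel_measurable R" using S by simp
    show "(\<lambda>x. tfun c j (C x)) \<in> borel_measurable R" for j using tm[of j] C by measurable
    show "AE x in R. (\<lambda>j. tfun c j (C x)) \<longlonglongrightarrow> indicator {x\<in>space R. C x \<le> c} x"
    proof (rule AE_I2)
      fix x assume "x \<in> space R"
      then have "indicator {x\<in>space R. C x \<le> c} x = (indicator {..c} (C x) :: real)"
        by (simp add: indicator_def)
      then show "(\<lambda>j. tfun c j (C x)) \<longlonglongrightarrow> indicator {x\<in>space R. C x \<le> c} x"
        using tfun_lim by simp
    qed
    show "AE x in R. norm (tfun c j (C x)) \<le> 1" for j using tfun_bound by simp
  qed simp
  also have "(\<integral>x. indicator {x\<in>space R. C x \<le> c} x \<partial>R) = measure R {x\<in>space R. C x \<le> c}"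
    by (simp add: Int_absorb2)
  finally show ?thesis .
qed

lemma moments_cdf_eq:
  fixes A :: "'a \<Rightarrow> real" and B :: "'b \<Rightarrow> real"
  assumes P: "prob_space P" and Q: "prob_space Q"
    and A: "A \<in> borel_measurable P" and B: "B \<in> borel_measurable Q"
    and Ar: "\<And>x. x \<in> space P \<Longrightarrow> A x \<in> {0..1}"
    and Br: "\<And>x. x \<in> space Q \<Longrightarrow> B x \<in> {0..1}"
    and mom: "\<And>k. (\<integral>x. A x ^ k \<partial>P) = (\<integral>x. B x ^ k \<partial>Q)"
  shows "measure P {x\<in>space P. A x \<le> c} = measure Q {x\<in>space Q. B x \<le> c}"
proof -
  have eq: "(\<lambda>j. \<integral>x. tfun c j (A x) \<partial>P) = (\<lambda>j. \<integral>x. tfun c j (B x) \<partial>Q)"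
    using moments_cont_eq[OF P Q A B Ar Br mom tfun_cont] by simp
  show ?thesis
    using tfun_integral_lim[OF P A, of c] tfun_integral_lim[OF Q B, of c] unfolding eq
    by (rule LIMSEQ_unique)
qed


definition Yf :: "(real \<Rightarrow> 'w \<Rightarrow> ennreal) \<Rightarrow> real \<Rightarrow> 'w \<Rightarrow> real" where
  "Yf X t \<omega> = (if X t \<omega> = \<top> then 0 else exp (- enn2real (X t \<omega>)))"

lemma Yf_range: "Yf X t \<omega> \<in> {0..1}"
  unfolding Yf_def by auto

lemma Yf_meas: assumes [measurable]: "X t \<in> borel_measurable M" shows "Yf X t \<in> borel_measurable M"
  unfolding Yf_def by measurable

lemma laplaceD:
  assumes "has_laplace_exponent M X G" "0 \<le> t"
  shows "prob_space M" "X t \<in> borel_measurable M"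
    "\<And>z. z > 0 \<Longrightarrow> (\<integral>\<omega>. (if X t \<omega> = \<top> then 0 else exp (- (z * enn2real (X t \<omega>)))) \<partial>M) = exp (- (t * G z))"
  using assms unfolding has_laplace_exponent_def by auto

lemma Yf_moment:
  assumes L: "has_laplace_exponent M X G" and t: "0 \<le> t"
  shows "(\<integral>\<omega>. Yf X t \<omega> ^ k \<partial>M) = (if k = 0 then 1 else exp (- (t * G (real k))))"
proof (cases "k = 0")
  case True
  interpret prob_space M using laplaceD[OF L t] by simp
  show ?thesis using True prob_space by simp
next
  case False
  have "Yf X t \<omega> ^ k = (if X t \<omega> = \<top> then 0 else exp (- (real k * enn2real (X t \<omega>))))" for \<omega>
  proof -
    have "exp (- (real k * e)) = exp (- e) ^ k" for e :: real
      using exp_of_nat_mult[of k "- e"] by simp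
    then show ?thesis using False unfolding Yf_def by simp
  qed
  then show ?thesis using laplaceD(3)[OF L t, of "real k"] False by simp
qed

lemma F_eq_Yf:
  assumes a: "a > 0"
  shows "{\<omega>\<in>space M. ennreal a \<le> X t \<omega>} = {\<omega>\<in>space M. Yf X t \<omega> \<le> exp (- a)}"
proof -
  have "ennreal a \<le> X t \<omega> \<longleftrightarrow> Yf X t \<omega> \<le> exp (- a)" for \<omega>
  proof (cases "X t \<omega> = \<top>")
    case True then show ?thesis unfolding Yf_def by simp
  next
    case False
    then have x: "X t \<omega> = ennreal (enn2real (X t \<omega>))" by (simp add: less_top)
    have "ennreal a \<le> X t \<omega> \<longleftrightarrow> a \<le> enn2real (X t \<omega>)"
      by (subst x) (simp add: ennreal_le_iff)
    also have "\<dots> \<longleftrightarrow> Yf X t \<omega> \<le> exp (- a)" using False unfolding Yf_def by simp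
    finally show ?thesis .
  qed
  then show ?thesis by auto
qed

lemma F_mono:
  assumes L: "has_laplace_exponent M X G" and s: "0 \<le> s" and st: "s \<le> t"
  shows "measure M {\<omega>\<in>space M. ennreal a \<le> X s \<omega>} \<le> measure M {\<omega>\<in>space M. ennreal a \<le> X t \<omega>}"
proof (cases "a \<le> 0")
  case True
  then have "ennreal a = 0" by (simp add: ennreal_eq_0_iff)
  then show ?thesis by simp
next
  case False
  then have a: "a > 0" by simp
  define c where "c = exp (- a)"
  interpret M: prob_space M using laplaceD[OF L s] by simp
  interpret MM: pair_prob_space M M ..
  have t: "0 \<le> t" using s st by simp
  have r: "0 \<le> t - s" using st by simp
  have ms: "Yf X s \<in> borel_measurable M" using laplaceD(2)[OF L s] by (rule Yf_meas)
  have mr: "Yf X (t - s) \<in> borel_measurable M" using laplaceD(2)[OF L r] by (rule Yf_meas)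
  have mt: "Yf X t \<in> borel_measurable M" using laplaceD(2)[OF L t] by (rule Yf_meas)
  define B where "B p = Yf X s (fst p) * Yf X (t - s) (snd p)" for p
  have mB: "B \<in> borel_measurable (M \<Otimes>\<^sub>M M)" unfolding B_def using ms mr by measurable
  have Br: "B p \<in> {0..1}" for p
    using Yf_range[of X s "fst p"] Yf_range[of X "t - s" "snd p"] unfolding B_def
    by (auto intro: mult_le_one)
  have momB: "(\<integral>p. B p ^ k \<partial>(M \<Otimes>\<^sub>M M)) = (\<integral>\<omega>. Yf X t \<omega> ^ k \<partial>M)" for k
  proof -
    have int: "integrable (M \<Otimes>\<^sub>M M) (\<lambda>(x, y). Yf X s x ^ k * Yf X (t - s) y ^ k)"
    proof (rule MM.P.integrable_const_bound[where B=1])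
      show "AE p in M \<Otimes>\<^sub>M M. norm ((\<lambda>(x, y). Yf X s x ^ k * Yf X (t - s) y ^ k) p) \<le> 1"
      proof (rule AE_I2)
        fix p :: "'a \<times> 'a"
        obtain x y where p: "p = (x, y)" by (cases p)
        have "0 \<le> Yf X s x" "Yf X s x \<le> 1" "0 \<le> Yf X (t - s) y" "Yf X (t - s) y \<le> 1"
          using Yf_range[of X s x] Yf_range[of X "t - s" y] by auto
        then show "norm ((\<lambda>(x, y). Yf X s x ^ k * Yf X (t - s) y ^ k) p) \<le> 1"
          unfolding p by (auto intro!: mult_le_one power_le_one)
      qed
    qed (use ms mr in measurable)
    have "(\<integral>p. B p ^ k \<partial>(M \<Otimes>\<^sub>M M)) = (\<integral>p. (\<lambda>(x, y). Yf X s x ^ k * Yf X (t - s) y ^ k) p \<partial>(M \<Otimes>\<^sub>M M))"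
      unfolding B_def by (auto simp: power_mult_distrib intro!: Bochner_Integration.integral_cong)
    also have "\<dots> = (\<integral>x. (\<integral>y. Yf X s x ^ k * Yf X (t - s) y ^ k \<partial>M) \<partial>M)"
      using MM.integral_fst[OF int] by simp
    also have "\<dots> = (\<integral>x. Yf X s x ^ k \<partial>M) * (\<integral>y. Yf X (t - s) y ^ k \<partial>M)"
      by simp
    also have "\<dots> = (\<integral>\<omega>. Yf X t \<omega> ^ k \<partial>M)"
      unfolding Yf_moment[OF L s] Yf_moment[OF L r] Yf_moment[OF L t]
      by (auto simp: exp_add[symmetric] algebra_simps)
    finally show ?thesis .
  qed
  have eq: "measure M {\<omega>\<in>space M. Yf X t \<omega> \<le> c} = measure (M \<Otimes>\<^sub>M M) {p\<in>space (M \<Otimes>\<^sub>M M). B p \<le> c}"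
    by (rule moments_cdf_eq[OF M.prob_space_axioms MM.P.prob_space_axioms mt mB Yf_range Br momB[symmetric]])
  have S: "{\<omega>\<in>space M. Yf X s \<omega> \<le> c} \<in> sets M" using ms by measurable
  have "measure M {\<omega>\<in>space M. Yf X s \<omega> \<le> c} = measure (M \<Otimes>\<^sub>M M) ({\<omega>\<in>space M. Yf X s \<omega> \<le> c} \<times> space M)"
    using M.emeasure_pair_measure_Times[OF S sets.top] M.emeasure_space_1 by (simp add: measure_def)
  also have "\<dots> \<le> measure (M \<Otimes>\<^sub>M M) {p\<in>space (M \<Otimes>\<^sub>M M). B p \<le> c}"
  proof (rule MM.P.finite_measure_mono)
    show "{p\<in>space (M \<Otimes>\<^sub>M M). B p \<le> c} \<in> sets (M \<Otimes>\<^sub>M M)" using mB by measurable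
    show "{\<omega>\<in>space M. Yf X s \<omega> \<le> c} \<times> space M \<subseteq> {p\<in>space (M \<Otimes>\<^sub>M M). B p \<le> c}"
    proof safe
      fix x y assume x: "x \<in> space M" "Yf X s x \<le> c" and y: "y \<in> space M"
      show "(x, y) \<in> space (M \<Otimes>\<^sub>M M)" using x y by (simp add: space_pair_measure)
      have "B (x, y) \<le> Yf X s x"
        using Yf_range[of X s x] Yf_range[of X "t - s" y] unfolding B_def
        by (auto intro: mult_left_le)
      then show "B (x, y) \<le> c" using x by simp
    qed
  qed
  finally show ?thesis
    using eq unfolding c_def F_eq_Yf[OF a] by simp
qed


definition Fm :: "'w measure \<Rightarrow> (real \<Rightarrow> 'w \<Rightarrow> ennreal) \<Rightarrow> real \<Rightarrow> real \<Rightarrow> real" where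
  "Fm M X a s = measure M {\<omega>\<in>space M. ennreal a \<le> X s \<omega>}"

lemma Fm_mono_t:
  "has_laplace_exponent M X G \<Longrightarrow> 0 \<le> s \<Longrightarrow> s \<le> t \<Longrightarrow> Fm M X a s \<le> Fm M X a t"
  unfolding Fm_def by (rule F_mono)

lemma Fm_antimono_a:
  assumes L: "has_laplace_exponent M X G" and s: "0 \<le> s" and aa: "a \<le> a'"
  shows "Fm M X a' s \<le> Fm M X a s"
proof -
  interpret prob_space M using laplaceD[OF L s] by simp
  have [measurable]: "X s \<in> borel_measurable M" using laplaceD[OF L s] by simp
  show ?thesis unfolding Fm_def
  proof (rule finite_measure_mono)
    have "ennreal a \<le> ennreal a'" using aa by (rule ennreal_leI)
    then show "{\<omega> \<in> space M. ennreal a' \<le> X s \<omega>} \<subseteq> {\<omega> \<in> space M. ennreal a \<le> X s \<omega>}"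
      by (auto dest: order_trans)
  qed measurable
qed

lemma Fm_range:
  assumes L: "has_laplace_exponent M X G" and s: "0 \<le> s"
  shows "0 \<le> Fm M X a s" "Fm M X a s \<le> 1"
proof -
  interpret prob_space M using laplaceD[OF L s] by simp
  show "0 \<le> Fm M X a s" "Fm M X a s \<le> 1" unfolding Fm_def by auto
qed

lemma Fm_meas_a:
  assumes L: "has_laplace_exponent M X G" and s: "0 \<le> s"
  shows "(\<lambda>a. Fm M X a s) \<in> borel_measurable borel"
proof -
  have "mono (\<lambda>a. - Fm M X a s)"
    by (rule monoI) (use Fm_antimono_a[OF L s] in simp)
  then have "(\<lambda>a. - Fm M X a s) \<in> borel_measurable borel" by (rule borel_measurable_mono)
  then have "(\<lambda>a. - (- Fm M X a s)) \<in> borel_measurable borel" by measurable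
  then show ?thesis by simp
qed

lemma level_def2: "levy_level M X a b = Inf (ennreal ` {t. 0 \<le> t \<and> b \<le> Fm M X a t})"
  unfolding levy_level_def Fm_def by simp

lemma level_le_iff:
  assumes L: "has_laplace_exponent M X G" and t: "0 \<le> t"
  shows "levy_level M X a b \<le> ennreal t \<longleftrightarrow> (\<forall>k::nat. b \<le> Fm M X a (t + 1 / real (Suc k)))"
proof
  assume le: "levy_level M X a b \<le> ennreal t"
  show "\<forall>k::nat. b \<le> Fm M X a (t + 1 / real (Suc k))"
  proof
    fix k :: nat
    have pos: "0 < 1 / real (Suc k)" by simp
    have "ennreal t < ennreal (t + 1 / real (Suc k))"
      using t pos by (subst ennreal_less_iff) auto
    then obtain z where z: "z \<in> ennreal ` {t. 0 \<le> t \<and> b \<le> Fm M X a t}" "z < ennreal (t + 1 / real (Suc k))"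
      using le unfolding level_def2 Inf_le_iff by blast
    then obtain s where s: "0 \<le> s" "b \<le> Fm M X a s" "z = ennreal s" by auto
    have "ennreal s < ennreal (t + 1 / real (Suc k))" using z(2) unfolding s(3) .
    then have "s < t + 1 / real (Suc k)" using ennreal_less_iff[OF s(1)] by blast
    then have "Fm M X a s \<le> Fm M X a (t + 1 / real (Suc k))"
      using Fm_mono_t[OF L s(1)] by simp
    then show "b \<le> Fm M X a (t + 1 / real (Suc k))" using s by simp
  qed
next
  assume all: "\<forall>k::nat. b \<le> Fm M X a (t + 1 / real (Suc k))"
  have mem: "ennreal (t + 1 / real (Suc k)) \<in> ennreal ` {t. 0 \<le> t \<and> b \<le> Fm M X a t}" for k
    using all t by (intro imageI) (auto intro: add_nonneg_nonneg)
  show "levy_level M X a b \<le> ennreal t"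
    unfolding level_def2 Inf_le_iff
  proof (intro allI impI)
    fix y assume y: "ennreal t < y"
    show "\<exists>z\<in>ennreal ` {t. 0 \<le> t \<and> b \<le> Fm M X a t}. z < y"
    proof (cases "y = \<top>")
      case True
      then show ?thesis using mem[of 0] by (intro bexI[of _ "ennreal (t + 1 / real (Suc 0))"]) auto
    next
      case False
      then obtain r where r: "y = ennreal r" "0 \<le> r" by (cases y) auto
      then have tr: "t < r" using y t by (simp add: ennreal_less_iff)
      obtain k :: nat where k0: "1 / (r - t) < real k"
        using reals_Archimedean2 by blast
      then have k: "1 / (r - t) < real (Suc k)" by simp
      have "1 < real (Suc k) * (r - t)" using k tr by (simp add: field_simps)
      then have "1 / real (Suc k) < r - t" by (simp add: field_simps)
      then have "ennreal (t + 1 / real (Suc k)) < ennreal r"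
        using t by (subst ennreal_less_iff) auto
      then have "ennreal (t + 1 / real (Suc k)) < y" unfolding r(1) .
      then show ?thesis using mem[of k] by blast
    qed
  qed
qed

lemma level_meas:
  assumes L: "has_laplace_exponent M X G"
    and f[measurable]: "f \<in> borel_measurable N" and g[measurable]: "g \<in> borel_measurable N"
  shows "(\<lambda>x. levy_level M X (f x) (g x)) \<in> borel_measurable N"
proof (rule borel_measurableI_le)
  fix y :: ennreal
  show "{x \<in> space N. levy_level M X (f x) (g x) \<le> y} \<in> sets N"
  proof (cases "y = \<top>")
    case True then show ?thesis by simp
  next
    case False
    then obtain t where t: "y = ennreal t" "0 \<le> t" by (cases y) auto
    have m: "(\<lambda>a. Fm M X a (t + 1 / real (Suc k))) \<in> borel_measurable borel" for k
      by (rule Fm_meas_a[OF L]) (use t in auto)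
    have eq: "{x \<in> space N. levy_level M X (f x) (g x) \<le> y} =
      (\<Inter>k. {x \<in> space N. g x \<le> Fm M X (f x) (t + 1 / real (Suc k))})"
      using level_le_iff[OF L t(2)] t(1) by auto
    have "{x \<in> space N. g x \<le> Fm M X (f x) (t + 1 / real (Suc k))} \<in> sets N" for k
      using m[of k] by measurable
    then show ?thesis unfolding eq by auto
  qed
qed

lemma level_mono_a:
  assumes L: "has_laplace_exponent M X G" and aa: "a \<le> a'"
  shows "levy_level M X a b \<le> levy_level M X a' b"
  unfolding level_def2
proof (rule Inf_superset_mono, rule image_mono, safe)
  fix s assume "0 \<le> s" "b \<le> Fm M X a' s"
  then show "b \<le> Fm M X a s" using Fm_antimono_a[OF L \<open>0 \<le> s\<close> aa] by simp
qed


lemma exp_density_le: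
  assumes x: "0 < x" and e: "0 \<le> e"
  shows "emeasure (density lborel (exponential_density x)) {..e} = ennreal (1 - exp (- (x * e)))"
  using emeasure_erlang_density[OF x, of 0 e] e by (simp add: erlang_CDF_0)

lemma Fm_exp_nn_integral:
  assumes L: "has_laplace_exponent M X G" and x: "0 < x" and s: "0 \<le> s"
  shows "(\<integral>\<^sup>+a. ennreal (Fm M X a s) \<partial>density lborel (exponential_density x)) = ennreal (1 - exp (- (s * G x)))"
proof -
  interpret M: prob_space M using laplaceD[OF L s] by simp
  interpret pair_sigma_finite M lborel ..
  have Xm[measurable]: "X s \<in> borel_measurable M" using laplaceD[OF L s] by simp
  have Fmm[measurable]: "(\<lambda>a. Fm M X a s) \<in> borel_measurable borel" using Fm_meas_a[OF L s] .
  define D where "D = exponential_density x"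
  have Dm[measurable]: "D \<in> borel_measurable borel" unfolding D_def exponential_density_def by measurable
  have D0: "0 \<le> D a" for a unfolding D_def using exponential_density_nonneg[OF x] by simp
  define Lf where "Lf \<omega> = (if X s \<omega> = \<top> then 0 else exp (- (x * enn2real (X s \<omega>))))" for \<omega>
  have Lfm[measurable]: "Lf \<in> borel_measurable M" unfolding Lf_def by measurable
  have Lf01: "0 \<le> Lf \<omega>" "Lf \<omega> \<le> 1" for \<omega>
    unfolding Lf_def using x by (auto simp: enn2real_nonneg)
  have "(\<integral>\<^sup>+a. ennreal (Fm M X a s) \<partial>density lborel D) = (\<integral>\<^sup>+a. ennreal (D a) * ennreal (Fm M X a s) \<partial>lborel)"
    by (subst nn_integral_density) auto
  also have "\<dots> = (\<integral>\<^sup>+a. (\<integral>\<^sup>+\<omega>. ennreal (D a) * indicator {p. ennreal (snd p) \<le> X s (fst p)} (\<omega>, a) \<partial>M) \<partial>lborel)"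
  proof (rule nn_integral_cong)
    fix a
    have "ennreal (Fm M X a s) = emeasure M {\<omega>\<in>space M. ennreal a \<le> X s \<omega>}"
      unfolding Fm_def by (simp add: M.emeasure_eq_measure)
    also have "\<dots> = (\<integral>\<^sup>+\<omega>. indicator {\<omega>\<in>space M. ennreal a \<le> X s \<omega>} \<omega> \<partial>M)"
      by (rule nn_integral_indicator[symmetric]) measurable
    also have "\<dots> = (\<integral>\<^sup>+\<omega>. indicator {p. ennreal (snd p) \<le> X s (fst p)} (\<omega>, a) \<partial>M)"
      by (rule nn_integral_cong) (auto simp: indicator_def)
    finally show "ennreal (D a) * ennreal (Fm M X a s) = (\<integral>\<^sup>+\<omega>. ennreal (D a) * indicator {p. ennreal (snd p) \<le> X s (fst p)} (\<omega>, a) \<partial>M)"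
      by (simp add: nn_integral_cmult)
  qed
  also have "\<dots> = (\<integral>\<^sup>+\<omega>. (\<integral>\<^sup>+a. ennreal (D a) * indicator {p. ennreal (snd p) \<le> X s (fst p)} (\<omega>, a) \<partial>lborel) \<partial>M)"
    by (rule Fubini') measurable
  also have "\<dots> = (\<integral>\<^sup>+\<omega>. ennreal (1 - Lf \<omega>) \<partial>M)"
  proof (rule nn_integral_cong)
    fix \<omega> assume "\<omega> \<in> space M"
    have "(\<integral>\<^sup>+a. ennreal (D a) * indicator {p. ennreal (snd p) \<le> X s (fst p)} (\<omega>, a) \<partial>lborel)
        = emeasure (density lborel D) {a. ennreal a \<le> X s \<omega>}"
      by (subst emeasure_density) (auto intro!: nn_integral_cong simp: indicator_def)
    also have "\<dots> = ennreal (1 - Lf \<omega>)"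
    proof (cases "X s \<omega> = \<top>")
      case True
      interpret D: prob_space "density lborel D" unfolding D_def using prob_space_exponential_density[OF x] .
      have "emeasure (density lborel D) UNIV = 1" using D.emeasure_space_1 by simp
      then show ?thesis using True unfolding Lf_def by simp
    next
      case False
      define e where "e = enn2real (X s \<omega>)"
      have e0: "0 \<le> e" unfolding e_def by (simp add: enn2real_nonneg)
      have Xe: "X s \<omega> = ennreal e" unfolding e_def using False by (simp add: less_top)
      have "{a. ennreal a \<le> X s \<omega>} = {..e}" unfolding Xe using e0 by auto
      then show ?thesis using exp_density_le[OF x e0] False unfolding Lf_def D_def e_def by simp
    qed
    finally show "(\<integral>\<^sup>+a. ennreal (D a) * indicator {p. ennreal (snd p) \<le> X s (fst p)} (\<omega>, a) \<partial>lborel) = ennreal (1 - Lf \<omega>)" .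
  qed
  also have "\<dots> = ennreal (\<integral>\<omega>. 1 - Lf \<omega> \<partial>M)"
  proof (rule nn_integral_eq_integral)
    show "integrable M (\<lambda>\<omega>. 1 - Lf \<omega>)"
      by (rule M.integrable_const_bound[where B=1]) (use Lf01 in auto)
  qed (use Lf01 in auto)
  also have "(\<integral>\<omega>. 1 - Lf \<omega> \<partial>M) = 1 - (\<integral>\<omega>. Lf \<omega> \<partial>M)"
  proof -
    have "integrable M Lf" by (rule M.integrable_const_bound[where B=1]) (use Lf01 in auto)
    then show ?thesis using M.prob_space by simp
  qed
  also have "(\<integral>\<omega>. Lf \<omega> \<partial>M) = exp (- (s * G x))"
    unfolding Lf_def using laplaceD(3)[OF L s x] .
  finally show ?thesis unfolding D_def .
qed


definition hval :: "(real \<Rightarrow> real \<Rightarrow> ennreal) \<Rightarrow> (nat \<Rightarrow> real) \<Rightarrow> (nat \<Rightarrow> real) \<Rightarrow> (nat \<times> real) list \<Rightarrow> nat \<Rightarrow> ennreal" where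
  "hval l H Y us i = l (Y i / snd (us!i)) (H (fst (us!i)))"

definition dsinv where
  "dsinv l H Y us s \<longleftrightarrow>
    (fst s = None \<and> snd s = \<top> \<and> (\<forall>i<length us. hval l H Y us i = \<top>)) \<or>
    (\<exists>j<length us. fst s = Some (fst (us!j)) \<and> snd s = hval l H Y us j \<and> hval l H Y us j < \<top> \<and>
        (\<forall>i<j. hval l H Y us j < hval l H Y us i) \<and> (\<forall>i<length us. hval l H Y us j \<le> hval l H Y us i))"

lemma ds_run_snoc: "ds_run l H Y (us @ [u]) = ds_step l H (Y (length us)) u (ds_run l H Y us)"
  unfolding ds_run_def by (simp add: enumerate_append_eq)

lemma hval_snoc: "i < length us \<Longrightarrow> hval l H Y (us @ [u]) i = hval l H Y us i"
  unfolding hval_def by (simp add: nth_append)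

lemma hval_last: "hval l H Y (us @ [u]) (length us) = l (Y (length us) / snd u) (H (fst u))"
  unfolding hval_def by simp

lemma dsinv_run: "dsinv l H Y us (ds_run l H Y us)"
proof (induction us rule: rev_induct)
  case Nil
  then show ?case unfolding dsinv_def ds_run_def ds_init_def by simp
next
  case (snoc u us)
  define s where "s = ds_run l H Y us"
  define n where "n = length us"
  define h where "h = l (Y n / snd u) (H (fst u))"
  have IH: "dsinv l H Y us s" using snoc unfolding s_def .
  have hv: "\<And>i. i < n \<Longrightarrow> hval l H Y (us @ [u]) i = hval l H Y us i"
    unfolding n_def by (rule hval_snoc)
  have hn: "hval l H Y (us @ [u]) n = h" unfolding n_def h_def by (rule hval_last)
  have nth1: "(us @ [u]) ! n = u" unfolding n_def by simp
  have nth2: "\<And>i. i < n \<Longrightarrow> (us @ [u]) ! i = us ! i" unfolding n_def by (simp add: nth_append)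
  have len: "length (us @ [u]) = Suc n" unfolding n_def by simp
  have step: "ds_run l H Y (us @ [u]) = (if h < snd s then (Some (fst u), h) else s)"
    unfolding ds_run_snoc s_def h_def n_def ds_step_def Let_def by simp
  show ?case
  proof (cases "h < snd s")
    case True
    have all: "\<forall>i<n. h < hval l H Y us i"
      using IH True unfolding dsinv_def n_def
      by (auto intro: less_le_trans)
    have "h < \<top>" using True top_greatest[of "snd s"] by (rule less_le_trans)
    then show ?thesis unfolding step dsinv_def using True all len
      by (intro disjI2 exI[of _ n])
         (auto simp: hn hv nth1 less_Suc_eq less_imp_le)
  next
    case False
    then have hs: "snd s \<le> h" by simp
    have run: "ds_run l H Y (us @ [u]) = s" using False step by simp
    from IH[unfolded dsinv_def] have "dsinv l H Y (us @ [u]) s"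
    proof (elim disjE exE conjE)
      assume a: "fst s = None" "snd s = \<top>" "\<forall>i<length us. hval l H Y us i = \<top>"
      then have "h = \<top>" using hs by (simp add: top_le)
      then show "dsinv l H Y (us @ [u]) s" unfolding dsinv_def
        using a unfolding len n_def[symmetric]
        by (intro disjI1) (auto simp: less_Suc_eq hn hv)
    next
      fix j assume j: "j < length us" "fst s = Some (fst (us ! j))" "snd s = hval l H Y us j"
        "hval l H Y us j < \<top>" "\<forall>i<j. hval l H Y us j < hval l H Y us i"
        "\<forall>i<length us. hval l H Y us j \<le> hval l H Y us i"
      have jn: "j < n" using j(1) unfolding n_def .
      show "dsinv l H Y (us @ [u]) s" unfolding dsinv_def
      proof (intro disjI2 exI[of _ j] conjI)
        show "j < length (us @ [u])" using jn len by simp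
        show "fst s = Some (fst ((us @ [u]) ! j))"
          using j(2) jn by (simp add: nth2)
        show "snd s = hval l H Y (us @ [u]) j"
          using j(3) jn by (simp add: hv)
        show "hval l H Y (us @ [u]) j < \<top>" using j(4) jn by (simp add: hv)
        show "\<forall>i<j. hval l H Y (us @ [u]) j < hval l H Y (us @ [u]) i"
          using j(5) jn by (simp add: hv)
        show "\<forall>i<length (us @ [u]). hval l H Y (us @ [u]) j \<le> hval l H Y (us @ [u]) i"
        proof (intro allI impI)
          fix i assume "i < length (us @ [u])"
          then have "i < n \<or> i = n" using len by auto
          then show "hval l H Y (us @ [u]) j \<le> hval l H Y (us @ [u]) i"
          proof
            assume "i < n" then show ?thesis using j(6) jn unfolding n_def by (simp add: hv n_def)
          next
            assume "i = n" then show ?thesis using j(3) hs jn by (simp add: hv hn)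
          qed
        qed
      qed
    qed
    then show ?thesis using run by simp
  qed
qed

lemma ds_run_char:
  "fst (ds_run l H Y us) = Some v \<longleftrightarrow>
    (\<exists>j<length us. fst (us!j) = v \<and> hval l H Y us j < \<top> \<and>
       (\<forall>i<j. hval l H Y us j < hval l H Y us i) \<and> (\<forall>i<length us. hval l H Y us j \<le> hval l H Y us i))"
  (is "?L \<longleftrightarrow> ?R")
proof
  assume ?L
  then show ?R using dsinv_run[of l H Y us] unfolding dsinv_def by auto
next
  assume ?R
  then obtain j where j: "j < length us" "fst (us!j) = v" "hval l H Y us j < \<top>"
    "\<forall>i<j. hval l H Y us j < hval l H Y us i" "\<forall>i<length us. hval l H Y us j \<le> hval l H Y us i"
    by blast
  from dsinv_run[of l H Y us] show ?L unfolding dsinv_def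
  proof (elim disjE exE conjE)
    assume "\<forall>i<length us. hval l H Y us i = \<top>"
    then show ?L using j(1,3) by auto
  next
    fix j' assume j': "j' < length us" "fst (ds_run l H Y us) = Some (fst (us ! j'))"
      "\<forall>i<j'. hval l H Y us j' < hval l H Y us i" "\<forall>i<length us. hval l H Y us j' \<le> hval l H Y us i"
    have "j = j'"
    proof (rule ccontr)
      assume "j \<noteq> j'"
      then have "j < j' \<or> j' < j" by auto
      then show False
      proof
        assume "j < j'"
        then have "hval l H Y us j' < hval l H Y us j" using j'(3) by auto
        moreover have "hval l H Y us j \<le> hval l H Y us j'" using j(5) j'(1) by auto
        ultimately show False by simp
      next
        assume "j' < j"
        then have "hval l H Y us j < hval l H Y us j'" using j(4) by auto
        moreover have "hval l H Y us j' \<le> hval l H Y us j" using j'(4) j(1) by auto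
        ultimately show False by simp
      qed
    qed
    then show ?L using j'(2) j(2) by simp
  qed
qed


lemma exp_density_gt:
  assumes b: "0 < b" and x: "0 \<le> x"
  shows "emeasure (density lborel (exponential_density b)) {y. x < y} = ennreal (exp (- (b * x)))"
proof -
  interpret D: prob_space "density lborel (exponential_density b)"
    using prob_space_exponential_density[OF b] .
  have e: "{y. x < y} = space (density lborel (exponential_density b)) - {..x}" by auto
  have "emeasure (density lborel (exponential_density b)) {y. x < y}
      = emeasure (density lborel (exponential_density b)) (space (density lborel (exponential_density b)))
        - emeasure (density lborel (exponential_density b)) {..x}"
    unfolding e by (rule emeasure_compl) (auto simp: D.emeasure_finite)
  also have "\<dots> = 1 - ennreal (1 - exp (- (b * x)))"
    using exp_density_le[OF b x] D.emeasure_space_1 by simp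
  also have "\<dots> = ennreal (exp (- (b * x)))"
    using b x by (simp add: ennreal_1[symmetric] ennreal_minus del: ennreal_1)
  finally show ?thesis .
qed

lemma exp_race_nn:
  assumes a: "0 < a" and b: "0 < b"
  shows "(\<integral>\<^sup>+x. emeasure (density lborel (exponential_density b)) {y. x < y} \<partial>density lborel (exponential_density a))
     = ennreal (a / (a + b))"
proof -
  have "(\<integral>\<^sup>+x. emeasure (density lborel (exponential_density b)) {y. x < y} \<partial>density lborel (exponential_density a))
     = (\<integral>\<^sup>+x. ennreal (if x < 0 then 1 else exp (- (b * x))) \<partial>density lborel (exponential_density a))"
  proof (rule nn_integral_cong)
    fix x :: real
    show "emeasure (density lborel (exponential_density b)) {y. x < y} = ennreal (if x < 0 then 1 else exp (- (b * x)))"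
    proof (cases "x < 0")
      case True
      interpret D: prob_space "density lborel (exponential_density b)"
        using prob_space_exponential_density[OF b] .
      have sub: "{y. 0 < y} \<subseteq> {y::real. x < y}" using True by auto
      have st: "{y::real. x < y} \<in> sets (density lborel (exponential_density b))"
      proof -
        have "{y::real. x < y} = {x<..}" by auto
        then show ?thesis by simp
      qed
      have "emeasure (density lborel (exponential_density b)) {y. 0 < y} \<le> emeasure (density lborel (exponential_density b)) {y. x < y}"
        by (rule emeasure_mono[OF sub st])
      then have "1 \<le> emeasure (density lborel (exponential_density b)) {y. x < y}"
        using exp_density_gt[OF b order.refl] by simp
      moreover have "emeasure (density lborel (exponential_density b)) {y. x < y} \<le> 1"
        by (rule D.emeasure_le_1)
      ultimately show ?thesis using True by simp
    next
      case False
      then show ?thesis using exp_density_gt[OF b] by simp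
    qed
  qed
  also have "\<dots> = (\<integral>\<^sup>+x. ennreal (exponential_density a x) * ennreal (if x < 0 then 1 else exp (- (b * x))) \<partial>lborel)"
    by (subst nn_integral_density) (auto simp: exponential_density_def)
  also have "\<dots> = (\<integral>\<^sup>+x. ennreal (a / (a + b)) * ennreal (exponential_density (a + b) x) \<partial>lborel)"
  proof (rule nn_integral_cong)
    fix x :: real
    show "ennreal (exponential_density a x) * ennreal (if x < 0 then 1 else exp (- (b * x))) =
      ennreal (a / (a + b)) * ennreal (exponential_density (a + b) x)"
    proof (cases "x < 0")
      case True then show ?thesis by (simp add: exponential_density_def)
    next
      case False
      then have x: "0 \<le> x" by simp
      have "a * exp (- x * a) * exp (- (b * x)) = a / (a + b) * ((a + b) * exp (- x * (a + b)))"
        using a b by (simp add: field_simps exp_add[symmetric])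
      then show ?thesis using False a b
        by (simp add: exponential_density_def ennreal_mult[symmetric])
    qed
  qed
  also have "\<dots> = ennreal (a / (a + b)) * (\<integral>\<^sup>+x. ennreal (exponential_density (a + b) x) \<partial>lborel)"
    by (rule nn_integral_cmult) (auto simp: exponential_density_def)
  also have "(\<integral>\<^sup>+x. ennreal (exponential_density (a + b) x) \<partial>lborel) = 1"
  proof -
    interpret D: prob_space "density lborel (exponential_density (a + b))"
      using prob_space_exponential_density a b by simp
    show ?thesis using D.emeasure_space_1
      by (subst (asm) emeasure_density) (auto simp: exponential_density_def)
  qed
  finally show ?thesis by simp
qed

lemma (in prob_space) indep_var_sym:
  assumes A: "indep_var S X T Y" shows "indep_var T Y S X"
proof -
  have r: "random_variable S X" "random_variable T Y"
    and I: "indep_set (sigma_sets (space M) { X -` A \<inter> space M | A. A \<in> sets S})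
      (sigma_sets (space M) { Y -` A \<inter> space M | A. A \<in> sets T})"
    using A unfolding indep_var_eq by auto
  have ev: "sigma_sets (space M) { X -` A \<inter> space M | A. A \<in> sets S} \<subseteq> events"
    "sigma_sets (space M) { Y -` A \<inter> space M | A. A \<in> sets T} \<subseteq> events"
    using I unfolding indep_sets2_eq by auto
  have "indep_set (sigma_sets (space M) { Y -` A \<inter> space M | A. A \<in> sets T})
      (sigma_sets (space M) { X -` A \<inter> space M | A. A \<in> sets S})"
  proof (rule indep_setI[OF ev(2) ev(1)])
    fix a b assume "a \<in> sigma_sets (space M) { Y -` A \<inter> space M | A. A \<in> sets T}"
      "b \<in> sigma_sets (space M) { X -` A \<inter> space M | A. A \<in> sets S}"
    then have "prob (b \<inter> a) = prob b * prob a" by (intro indep_setD[OF I])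
    then show "prob (a \<inter> b) = prob a * prob b" by (simp add: Int_commute mult.commute)
  qed
  then show ?thesis unfolding indep_var_eq using r by simp
qed

lemma (in prob_space) exp_race_less:
  assumes a: "0 < a" and b: "0 < b"
    and X: "distributed M lborel X (exponential_density a)"
    and Y: "distributed M lborel Y (exponential_density b)"
    and ind: "indep_var borel X borel Y"
  shows "prob {\<omega>\<in>space M. X \<omega> < Y \<omega>} = a / (a + b)"
proof -
  have Xm[measurable]: "X \<in> borel_measurable M" using distributed_measurable[OF X] by simp
  have Ym[measurable]: "Y \<in> borel_measurable M" using distributed_measurable[OF Y] by simp
  define Da where "Da = density lborel (exponential_density a)"
  define Db where "Db = density lborel (exponential_density b)"
  interpret Da: prob_space Da unfolding Da_def using prob_space_exponential_density[OF a] .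
  interpret Db: prob_space Db unfolding Db_def using prob_space_exponential_density[OF b] .
  interpret DD: pair_sigma_finite Da Db ..
  have dX: "distr M borel X = Da"
    unfolding Da_def distributed_distr_eq_density[OF X, symmetric] by (rule distr_cong) auto
  have dY: "distr M borel Y = Db"
    unfolding Db_def distributed_distr_eq_density[OF Y, symmetric] by (rule distr_cong) auto
  have joint: "distr M (borel \<Otimes>\<^sub>M borel) (\<lambda>x. (X x, Y x)) = Da \<Otimes>\<^sub>M Db"
    using ind unfolding indep_var_distribution_eq dX dY by simp
  have S0: "{p :: real \<times> real. fst p < snd p} \<in> sets borel"
    by (intro borel_open open_Collect_less continuous_intros)
  have S: "{p :: real \<times> real. fst p < snd p} \<in> sets (borel \<Otimes>\<^sub>M borel)"
    by (subst borel_prod) (rule S0)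
  have "emeasure M {\<omega>\<in>space M. X \<omega> < Y \<omega>} = emeasure (distr M (borel \<Otimes>\<^sub>M borel) (\<lambda>x. (X x, Y x))) {p. fst p < snd p}"
  proof -
    have m: "(\<lambda>x. (X x, Y x)) \<in> measurable M (borel \<Otimes>\<^sub>M borel)" by measurable
    have v: "(\<lambda>x. (X x, Y x)) -` {p. fst p < snd p} \<inter> space M = {\<omega>\<in>space M. X \<omega> < Y \<omega>}" by auto
    have e: "emeasure (distr M (borel \<Otimes>\<^sub>M borel) (\<lambda>x. (X x, Y x))) {p. fst p < snd p} = emeasure M ((\<lambda>x. (X x, Y x)) -` {p. fst p < snd p} \<inter> space M)"
      by (rule emeasure_distr[OF m S])
    show ?thesis unfolding e v ..
  qed
  also have "\<dots> = emeasure (Da \<Otimes>\<^sub>M Db) {p. fst p < snd p}" unfolding joint ..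
  also have "\<dots> = (\<integral>\<^sup>+x. emeasure Db (Pair x -` {p. fst p < snd p}) \<partial>Da)"
  proof (rule Db.emeasure_pair_measure_alt)
    have "sets (Da \<Otimes>\<^sub>M Db) = sets (borel \<Otimes>\<^sub>M borel)"
      by (rule sets_pair_measure_cong) (simp_all add: Da_def Db_def)
    then show "{p. fst p < snd p} \<in> sets (Da \<Otimes>\<^sub>M Db)"
      using S by (simp only:)
  qed
  also have "\<dots> = (\<integral>\<^sup>+x. emeasure Db {y. x < y} \<partial>Da)"
  proof -
    have "\<And>x::real. Pair x -` {p. fst p < snd p} = {y. x < y}" by auto
    then show ?thesis by (simp only:)
  qed
  also have "\<dots> = ennreal (a / (a + b))"
    unfolding Da_def Db_def by (rule exp_race_nn[OF a b])
  finally have "ennreal (prob {\<omega>\<in>space M. X \<omega> < Y \<omega>}) = ennreal (a / (a + b))"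
    by (simp only: emeasure_eq_measure)
  then show ?thesis using a b by (subst (asm) ennreal_inj) auto
qed

lemma (in prob_space) exp_race_le:
  assumes a: "0 < a" and b: "0 < b"
    and X: "distributed M lborel X (exponential_density a)"
    and Y: "distributed M lborel Y (exponential_density b)"
    and ind: "indep_var borel X borel Y"
  shows "prob {\<omega>\<in>space M. X \<omega> \<le> Y \<omega>} = a / (a + b)"
proof -
  have Xm[measurable]: "X \<in> borel_measurable M" using distributed_measurable[OF X] by simp
  have Ym[measurable]: "Y \<in> borel_measurable M" using distributed_measurable[OF Y] by simp
  have "prob {\<omega>\<in>space M. Y \<omega> < X \<omega>} = b / (b + a)"
    by (rule exp_race_less[OF b a Y X indep_var_sym[OF ind]])
  moreover have "{\<omega>\<in>space M. X \<omega> \<le> Y \<omega>} = space M - {\<omega>\<in>space M. Y \<omega> < X \<omega>}" by auto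
  ultimately have "prob {\<omega>\<in>space M. X \<omega> \<le> Y \<omega>} = 1 - b / (b + a)"
    by (simp add: prob_compl)
  also have "\<dots> = a / (a + b)" using a b by (simp add: field_simps)
  finally show ?thesis .
qed


abbreviation UM :: "real measure" where "UM \<equiv> uniform_measure lborel {0..1::real}"
abbreviation EM :: "real measure" where "EM \<equiv> density lborel (exponential_density 1)"

lemma prob_UM: "prob_space UM"
  by (rule prob_space_uniform_measure) auto

lemma prob_EM: "prob_space EM"
  by (rule prob_space_exponential_density) simp

definition NN :: "nat + nat \<Rightarrow> real measure" where
  "NN k = (case k of Inl _ \<Rightarrow> UM | Inr _ \<Rightarrow> EM)"

lemma prob_NN: "prob_space (NN k)"
  unfolding NN_def using prob_UM prob_EM by (cases k) auto

lemma sets_NN[simp]: "sets (NN k) = sets borel"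
  unfolding NN_def by (cases k) auto

definition Zc :: "nat \<Rightarrow> nat \<Rightarrow> nat + nat \<Rightarrow> (nat \<Rightarrow> real) \<times> (nat \<Rightarrow> real) \<Rightarrow> real" where
  "Zc n m k \<omega> = (case k of Inl u \<Rightarrow> if u < n then fst \<omega> u else 0 | Inr i \<Rightarrow> if i < m then snd \<omega> i else 0)"

definition KK :: "nat \<Rightarrow> nat \<Rightarrow> (nat + nat) set" where
  "KK n m = Inl ` {..<n} \<union> Inr ` {..<m}"

lemma sampler_space_alt: "sampler_space n m = (\<Pi>\<^sub>M u\<in>{..<n}. UM) \<Otimes>\<^sub>M (\<Pi>\<^sub>M i\<in>{..<m}. EM)"
  unfolding sampler_space_def ..

lemma prob_PH: "prob_space (\<Pi>\<^sub>M u\<in>{..<n}. UM)"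
  by (rule prob_space_PiM) (rule prob_UM)

lemma prob_PY: "prob_space (\<Pi>\<^sub>M i\<in>{..<m}. EM)"
  by (rule prob_space_PiM) (rule prob_EM)

lemma prob_sampler: "prob_space (sampler_space n m)"
proof -
  interpret H: prob_space "\<Pi>\<^sub>M u\<in>{..<n}. UM" by (rule prob_PH)
  interpret Y: prob_space "\<Pi>\<^sub>M i\<in>{..<m}. EM" by (rule prob_PY)
  interpret pair_prob_space "\<Pi>\<^sub>M u\<in>{..<n}. UM" "\<Pi>\<^sub>M i\<in>{..<m}. EM" ..
  show ?thesis unfolding sampler_space_alt by (rule P.prob_space_axioms)
qed

lemma meas_fst_comp[measurable]:
  "u < n \<Longrightarrow> (\<lambda>\<omega>. fst \<omega> u) \<in> borel_measurable (sampler_space n m)"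
  unfolding sampler_space_alt by measurable

lemma meas_snd_comp[measurable]:
  "i < m \<Longrightarrow> (\<lambda>\<omega>. snd \<omega> i) \<in> borel_measurable (sampler_space n m)"
  unfolding sampler_space_alt by measurable

lemma meas_fst_if: "(\<lambda>\<omega>. if u < n then fst \<omega> u else 0) \<in> borel_measurable (sampler_space n m)"
  by (cases "u < n") (simp_all add: meas_fst_comp)

lemma meas_snd_if: "(\<lambda>\<omega>. if i < m then snd \<omega> i else 0) \<in> borel_measurable (sampler_space n m)"
  by (cases "i < m") (simp_all add: meas_snd_comp)

lemma Zc_meas[measurable]: "Zc n m k \<in> borel_measurable (sampler_space n m)"
  unfolding Zc_def by (cases k) (simp_all add: meas_fst_if meas_snd_if)

lemma emeasure_sampler_Times:
  assumes A: "A \<in> sets (\<Pi>\<^sub>M u\<in>{..<n}. UM)" and B: "B \<in> sets (\<Pi>\<^sub>M i\<in>{..<m}. EM)"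
  shows "emeasure (sampler_space n m) (A \<times> B) = emeasure (\<Pi>\<^sub>M u\<in>{..<n}. UM) A * emeasure (\<Pi>\<^sub>M i\<in>{..<m}. EM) B"
proof -
  interpret Y: prob_space "\<Pi>\<^sub>M i\<in>{..<m}. EM" by (rule prob_PY)
  show ?thesis unfolding sampler_space_alt by (rule Y.emeasure_pair_measure_Times[OF A B])
qed

lemma distr_Zc:
  assumes k: "k \<in> KK n m"
  shows "distr (sampler_space n m) borel (Zc n m k) = NN k"
proof (rule measure_eqI)
  show "sets (distr (sampler_space n m) borel (Zc n m k)) = sets (NN k)" by simp
next
  fix A assume "A \<in> sets (distr (sampler_space n m) borel (Zc n m k))"
  then have A: "A \<in> sets borel" by simp
  interpret H: prob_space "\<Pi>\<^sub>M u\<in>{..<n}. UM" by (rule prob_PH)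
  interpret Y: prob_space "\<Pi>\<^sub>M i\<in>{..<m}. EM" by (rule prob_PY)
  interpret PH: product_prob_space "\<lambda>_. UM" "{..<n}" by (intro product_prob_spaceI prob_UM)
  interpret PY: product_prob_space "\<lambda>_. EM" "{..<m}" by (intro product_prob_spaceI prob_EM)
  have "emeasure (distr (sampler_space n m) borel (Zc n m k)) A =
    emeasure (sampler_space n m) (Zc n m k -` A \<inter> space (sampler_space n m))"
    using A by (rule emeasure_distr[OF Zc_meas])
  also have "\<dots> = emeasure (NN k) A"
  proof (cases k)
    case (Inl u)
    then have u: "u < n" using k unfolding KK_def by auto
    have "Zc n m k -` A \<inter> space (sampler_space n m) =
      {x\<in>space (\<Pi>\<^sub>M u\<in>{..<n}. UM). x u \<in> A} \<times> space (\<Pi>\<^sub>M i\<in>{..<m}. EM)"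
      using u Inl unfolding Zc_def sampler_space_alt by (auto simp: space_pair_measure)
    moreover have "{x\<in>space (\<Pi>\<^sub>M u\<in>{..<n}. UM). x u \<in> A} \<in> sets (\<Pi>\<^sub>M u\<in>{..<n}. UM)"
      using A by (intro sets_Collect_single) (use u in auto)
    ultimately have "emeasure (sampler_space n m) (Zc n m k -` A \<inter> space (sampler_space n m)) =
      emeasure (\<Pi>\<^sub>M u\<in>{..<n}. UM) {x\<in>space (\<Pi>\<^sub>M u\<in>{..<n}. UM). x u \<in> A}"
      using emeasure_sampler_Times Y.emeasure_space_1 by simp
    also have "\<dots> = emeasure UM A"
      using u A by (intro PH.emeasure_PiM_Collect_single) auto
    finally show ?thesis using Inl unfolding NN_def by simp
  next
    case (Inr i)
    then have i: "i < m" using k unfolding KK_def by auto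
    have "Zc n m k -` A \<inter> space (sampler_space n m) =
      space (\<Pi>\<^sub>M u\<in>{..<n}. UM) \<times> {x\<in>space (\<Pi>\<^sub>M i\<in>{..<m}. EM). x i \<in> A}"
      using i Inr unfolding Zc_def sampler_space_alt by (auto simp: space_pair_measure)
    moreover have "{x\<in>space (\<Pi>\<^sub>M i\<in>{..<m}. EM). x i \<in> A} \<in> sets (\<Pi>\<^sub>M i\<in>{..<m}. EM)"
      using A by (intro sets_Collect_single) (use i in auto)
    ultimately have "emeasure (sampler_space n m) (Zc n m k -` A \<inter> space (sampler_space n m)) =
      emeasure (\<Pi>\<^sub>M i\<in>{..<m}. EM) {x\<in>space (\<Pi>\<^sub>M i\<in>{..<m}. EM). x i \<in> A}"
      using emeasure_sampler_Times H.emeasure_space_1 by simp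
    also have "\<dots> = emeasure EM A"
      using i A by (intro PY.emeasure_PiM_Collect_single) auto
    finally show ?thesis using Inr unfolding NN_def by simp
  qed
  finally show "emeasure (distr (sampler_space n m) borel (Zc n m k)) A = emeasure (NN k) A" .
qed

lemma finite_KK: "finite (KK n m)" unfolding KK_def by simp

lemma Zc_indep:
  assumes n: "0 < n"
  shows "prob_space.indep_vars (sampler_space n m) (\<lambda>_. borel) (Zc n m) (KK n m)"
proof -
  interpret \<Omega>: prob_space "sampler_space n m" by (rule prob_sampler)
  interpret PN: product_prob_space NN "KK n m" by (intro product_prob_spaceI prob_NN)
  interpret PH: product_prob_space "\<lambda>_. UM" "{..<n}" by (intro product_prob_spaceI prob_UM)
  interpret PY: product_prob_space "\<lambda>_. EM" "{..<m}" by (intro product_prob_spaceI prob_EM)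
  have ne: "KK n m \<noteq> {}" using n unfolding KK_def by auto
  define f where "f \<omega> = (\<lambda>k\<in>KK n m. Zc n m k \<omega>)" for \<omega>
  have fm: "f \<in> measurable (sampler_space n m) (\<Pi>\<^sub>M k\<in>KK n m. borel)"
    unfolding f_def by (intro measurable_restrict Zc_meas)
  have rhs: "(\<Pi>\<^sub>M k\<in>KK n m. distr (sampler_space n m) borel (Zc n m k)) = (\<Pi>\<^sub>M k\<in>KK n m. NN k)"
    by (rule PiM_cong) (auto simp: distr_Zc)
  have lhs: "distr (sampler_space n m) (\<Pi>\<^sub>M k\<in>KK n m. borel) f = (\<Pi>\<^sub>M k\<in>KK n m. NN k)"
  proof (rule PN.PiM_eqI)
    show "finite (KK n m)" by (rule finite_KK)
    show "sets (distr (sampler_space n m) (\<Pi>\<^sub>M k\<in>KK n m. borel) f) = sets (\<Pi>\<^sub>M k\<in>KK n m. NN k)"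
    proof -
      have "sets (distr (sampler_space n m) (\<Pi>\<^sub>M k\<in>KK n m. borel) f) = sets (\<Pi>\<^sub>M k\<in>KK n m. (borel :: real measure))"
        by (rule sets_distr)
      also have "\<dots> = sets (\<Pi>\<^sub>M k\<in>KK n m. NN k)"
        by (rule sets_PiM_cong) auto
      finally show ?thesis .
    qed
  next
    fix A assume A: "\<And>k. k \<in> KK n m \<Longrightarrow> A k \<in> sets (NN k)"
    have Ab: "\<And>k. k \<in> KK n m \<Longrightarrow> A k \<in> sets borel" using A by simp
    have AH: "(\<Pi>\<^sub>E u\<in>{..<n}. A (Inl u)) \<in> sets (\<Pi>\<^sub>M u\<in>{..<n}. UM)"
      by (rule sets_PiM_I_finite) (use Ab in \<open>auto simp: KK_def\<close>)
    have AY: "(\<Pi>\<^sub>E i\<in>{..<m}. A (Inr i)) \<in> sets (\<Pi>\<^sub>M i\<in>{..<m}. EM)"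
      by (rule sets_PiM_I_finite) (use Ab in \<open>auto simp: KK_def\<close>)
    have APi: "(\<Pi>\<^sub>E k\<in>KK n m. A k) \<in> sets (\<Pi>\<^sub>M k\<in>KK n m. borel)"
      by (rule sets_PiM_I_finite) (use Ab finite_KK in auto)
    have vim: "f -` (\<Pi>\<^sub>E k\<in>KK n m. A k) \<inter> space (sampler_space n m) =
      (\<Pi>\<^sub>E u\<in>{..<n}. A (Inl u)) \<times> (\<Pi>\<^sub>E i\<in>{..<m}. A (Inr i))"
    proof (intro set_eqI iffI)
      fix \<omega> assume "\<omega> \<in> f -` (\<Pi>\<^sub>E k\<in>KK n m. A k) \<inter> space (sampler_space n m)"
      then have w: "\<And>k. k \<in> KK n m \<Longrightarrow> Zc n m k \<omega> \<in> A k" "\<omega> \<in> space (sampler_space n m)"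
        unfolding f_def by (auto simp: PiE_iff)
      from w(2) have e: "fst \<omega> \<in> extensional {..<n}" "snd \<omega> \<in> extensional {..<m}"
        unfolding sampler_space_alt by (auto simp: space_pair_measure space_PiM PiE_iff)
      have "fst \<omega> u \<in> A (Inl u)" if "u < n" for u
        using w(1)[of "Inl u"] that unfolding KK_def Zc_def by auto
      moreover have "snd \<omega> i \<in> A (Inr i)" if "i < m" for i
        using w(1)[of "Inr i"] that unfolding KK_def Zc_def by auto
      ultimately show "\<omega> \<in> (\<Pi>\<^sub>E u\<in>{..<n}. A (Inl u)) \<times> (\<Pi>\<^sub>E i\<in>{..<m}. A (Inr i))"
        using e by (cases \<omega>) (auto simp: PiE_iff)
    next
      fix \<omega> assume w: "\<omega> \<in> (\<Pi>\<^sub>E u\<in>{..<n}. A (Inl u)) \<times> (\<Pi>\<^sub>E i\<in>{..<m}. A (Inr i))"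
      have sp: "\<omega> \<in> space (sampler_space n m)"
        using w unfolding sampler_space_alt by (cases \<omega>) (auto simp: space_pair_measure space_PiM PiE_iff)
      have "Zc n m k \<omega> \<in> A k" if "k \<in> KK n m" for k
        using that w unfolding KK_def Zc_def by (cases \<omega>) (auto simp: PiE_iff)
      then show "\<omega> \<in> f -` (\<Pi>\<^sub>E k\<in>KK n m. A k) \<inter> space (sampler_space n m)"
        using sp unfolding f_def by (auto simp: PiE_iff)
    qed
    have "emeasure (distr (sampler_space n m) (\<Pi>\<^sub>M k\<in>KK n m. borel) f) (\<Pi>\<^sub>E k\<in>KK n m. A k)
        = emeasure (sampler_space n m) (f -` (\<Pi>\<^sub>E k\<in>KK n m. A k) \<inter> space (sampler_space n m))"
      by (rule emeasure_distr[OF fm APi])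
    also have "\<dots> = emeasure (\<Pi>\<^sub>M u\<in>{..<n}. UM) (\<Pi>\<^sub>E u\<in>{..<n}. A (Inl u)) *
        emeasure (\<Pi>\<^sub>M i\<in>{..<m}. EM) (\<Pi>\<^sub>E i\<in>{..<m}. A (Inr i))"
      unfolding vim by (rule emeasure_sampler_Times[OF AH AY])
    also have "\<dots> = (\<Prod>u\<in>{..<n}. emeasure UM (A (Inl u))) * (\<Prod>i\<in>{..<m}. emeasure EM (A (Inr i)))"
    proof -
      have "emeasure (\<Pi>\<^sub>M u\<in>{..<n}. UM) (\<Pi>\<^sub>E u\<in>{..<n}. A (Inl u)) = (\<Prod>u\<in>{..<n}. emeasure UM (A (Inl u)))"
        by (rule PH.emeasure_PiM) (use Ab in \<open>auto simp: KK_def\<close>)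
      moreover have "emeasure (\<Pi>\<^sub>M i\<in>{..<m}. EM) (\<Pi>\<^sub>E i\<in>{..<m}. A (Inr i)) = (\<Prod>i\<in>{..<m}. emeasure EM (A (Inr i)))"
        by (rule PY.emeasure_PiM) (use Ab in \<open>auto simp: KK_def\<close>)
      ultimately show ?thesis by simp
    qed
    also have "\<dots> = (\<Prod>k\<in>KK n m. emeasure (NN k) (A k))"
    proof -
      have "(\<Prod>k\<in>KK n m. emeasure (NN k) (A k)) =
        (\<Prod>k\<in>Inl ` {..<n}. emeasure (NN k) (A k)) * (\<Prod>k\<in>Inr ` {..<m}. emeasure (NN k) (A k))"
        unfolding KK_def by (rule prod.union_disjoint) auto
      also have "(\<Prod>k\<in>Inl ` {..<n}. emeasure (NN k) (A k)) = (\<Prod>u\<in>{..<n}. emeasure UM (A (Inl u)))"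
        by (subst prod.reindex) (auto simp: NN_def)
      also have "(\<Prod>k\<in>Inr ` {..<m}. emeasure (NN k) (A k)) = (\<Prod>i\<in>{..<m}. emeasure EM (A (Inr i)))"
        by (subst prod.reindex) (auto simp: NN_def)
      finally show ?thesis by simp
    qed
    finally show "emeasure (distr (sampler_space n m) (\<Pi>\<^sub>M k\<in>KK n m. borel) f) (\<Pi>\<^sub>E k\<in>KK n m. A k) =
      (\<Prod>k\<in>KK n m. emeasure (NN k) (A k))" .
  qed
  have iff: "\<Omega>.indep_vars (\<lambda>_. borel) (Zc n m) (KK n m) \<longleftrightarrow>
    distr (sampler_space n m) (\<Pi>\<^sub>M k\<in>KK n m. borel) (\<lambda>x. \<lambda>k\<in>KK n m. Zc n m k x) =
    (\<Pi>\<^sub>M k\<in>KK n m. distr (sampler_space n m) borel (Zc n m k))"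
    by (rule \<Omega>.indep_vars_iff_distr_eq_PiM[OF ne]) simp
  show ?thesis
    using iff lhs rhs unfolding f_def by simp
qed


lemma INF_level_Min:
  assumes L: "has_laplace_exponent M X G" and I: "finite I" "I \<noteq> {}"
  shows "(INF i\<in>I. levy_level M X (a i) b) = levy_level M X (Min (a ` I)) b"
proof (rule antisym)
  have "Min (a ` I) \<in> a ` I" using I by (intro Min_in) auto
  then obtain i0 where i0: "i0 \<in> I" "a i0 = Min (a ` I)" by (metis imageE)
  show "(INF i\<in>I. levy_level M X (a i) b) \<le> levy_level M X (Min (a ` I)) b"
    using INF_lower[OF i0(1), of "\<lambda>i. levy_level M X (a i) b"] i0(2) by simp
  show "levy_level M X (Min (a ` I)) b \<le> (INF i\<in>I. levy_level M X (a i) b)"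
  proof (rule INF_greatest)
    fix i assume "i \<in> I"
    then have "Min (a ` I) \<le> a i" using I by simp
    then show "levy_level M X (Min (a ` I)) b \<le> levy_level M X (a i) b" by (rule level_mono_a[OF L])
  qed
qed

lemma stream_vec_sum:
  "stream_vec us u = (\<Sum>i\<in>{i. i < length us \<and> fst (us!i) = u}. snd (us!i))"
proof (induction us rule: rev_induct)
  case Nil then show ?case by (simp add: stream_vec_def)
next
  case (snoc x us)
  define S where "S = {i. i < length us \<and> fst (us!i) = u}"
  have fS: "finite S" unfolding S_def by simp
  have c: "(\<Sum>i\<in>S. snd ((us @ [x]) ! i)) = (\<Sum>i\<in>S. snd (us ! i))"
    by (rule sum.cong) (auto simp: S_def nth_append)
  have "(\<Sum>i\<in>{i. i < length (us @ [x]) \<and> fst ((us @ [x])!i) = u}. snd ((us @ [x])!i)) =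
      (\<Sum>i\<in>S. snd (us!i)) + (if fst x = u then snd x else 0)"
  proof (cases "fst x = u")
    case True
    then have "{i. i < length (us @ [x]) \<and> fst ((us @ [x])!i) = u} = insert (length us) S"
      unfolding S_def by (auto simp: nth_append less_Suc_eq)
    moreover have "length us \<notin> S" unfolding S_def by simp
    ultimately show ?thesis using True fS c by simp
  next
    case False
    then have "{i. i < length (us @ [x]) \<and> fst ((us @ [x])!i) = u} = S"
      unfolding S_def by (auto simp: nth_append less_Suc_eq)
    then show ?thesis using False c by simp
  qed
  moreover have "stream_vec (us @ [x]) u = stream_vec us u + (if fst x = u then snd x else 0)"
    by (simp add: stream_vec_def)
  ultimately show ?case using snoc.IH unfolding S_def by simp
qed

lemma G_nonneg:
  assumes L: "has_laplace_exponent M X G" and z: "0 < z"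
  shows "0 \<le> G z"
proof -
  interpret prob_space M using laplaceD[OF L, of 1] by simp
  have m[measurable]: "X 1 \<in> borel_measurable M" using laplaceD[OF L, of 1] by simp
  define Lf where "Lf \<omega> = (if X 1 \<omega> = \<top> then 0 else exp (- (z * enn2real (X 1 \<omega>))))" for \<omega>
  have "(\<integral>\<omega>. Lf \<omega> \<partial>M) = exp (- (1 * G z))" unfolding Lf_def by (rule laplaceD(3)[OF L _ z]) simp
  moreover have "(\<integral>\<omega>. Lf \<omega> \<partial>M) \<le> (\<integral>\<omega>. 1 \<partial>M)"
  proof (rule integral_mono)
    show "integrable M Lf" unfolding Lf_def
      by (rule integrable_const_bound[where B=1]) (use z in \<open>auto simp: enn2real_nonneg\<close>)
    show "Lf \<omega> \<le> 1" for \<omega> unfolding Lf_def using z by (auto simp: enn2real_nonneg)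
  qed simp
  ultimately have "exp (- G z) \<le> 1" using prob_space by simp
  then show ?thesis by simp
qed

locale samp =
  fixes G :: "real \<Rightarrow> real" and M :: "'w measure" and X :: "real \<Rightarrow> 'w \<Rightarrow> ennreal"
    and n :: nat and us :: "(nat \<times> real) list"
  assumes L: "has_laplace_exponent M X G"
    and us: "\<forall>u\<in>set us. fst u < n \<and> snd u > 0"
    and npos: "0 < n"
    and G0: "G 0 = 0"
begin

definition vi where "vi i = fst (us!i)"
definition di where "di i = snd (us!i)"
definition Iu where "Iu u = {i. i < length us \<and> vi i = u}"
definition hv where "hv \<omega> i = levy_level M X (snd \<omega> i / di i) (fst \<omega> (vi i))"
definition T where "T u \<omega> = (INF i\<in>Iu u. hv \<omega> i)"
definition lam where "lam u = G (stream_vec us u)"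

lemma vi_lt: "i < length us \<Longrightarrow> vi i < n"
  using us nth_mem unfolding vi_def by blast

lemma di_pos: "i < length us \<Longrightarrow> 0 < di i"
  using us nth_mem unfolding di_def by blast

lemma finite_Iu: "finite (Iu u)" unfolding Iu_def by simp

lemma hv_meas[measurable]: "i < length us \<Longrightarrow> (\<lambda>\<omega>. hv \<omega> i) \<in> borel_measurable (sampler_space n (length us))"
  unfolding hv_def
proof (rule level_meas[OF L])
  assume i: "i < length us"
  show "(\<lambda>x. snd x i / di i) \<in> borel_measurable (sampler_space n (length us))"
    using meas_snd_comp[OF i] by measurable
  show "(\<lambda>x. fst x (vi i)) \<in> borel_measurable (sampler_space n (length us))"
    using meas_fst_comp[OF vi_lt[OF i]] .
qed

lemma T_meas[measurable]: "T u \<in> borel_measurable (sampler_space n (length us))"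
  unfolding T_def
  by (rule borel_measurable_INF) (auto simp: Iu_def intro: countable_finite)

lemma hval_eq: "hval (levy_level M X) (fst \<omega>) (snd \<omega>) us i = hv \<omega> i"
  unfolding hval_def hv_def vi_def di_def ..

lemma sv_sum: "stream_vec us u = (\<Sum>i\<in>Iu u. di i)"
  unfolding stream_vec_sum Iu_def vi_def di_def ..

lemma T_empty: "Iu u = {} \<Longrightarrow> T u \<omega> = \<top>"
  unfolding T_def by simp

lemma lam_empty: "Iu u = {} \<Longrightarrow> lam u = 0"
  unfolding lam_def sv_sum using G0 by simp

lemma sv_pos: "Iu u \<noteq> {} \<Longrightarrow> 0 < stream_vec us u"
  unfolding sv_sum using finite_Iu by (intro sum_pos) (auto simp: Iu_def di_pos)

lemma lam_nonneg: "0 \<le> lam u"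
proof (cases "Iu u = {}")
  case True then show ?thesis using lam_empty by simp
next
  case False then show ?thesis unfolding lam_def by (rule G_nonneg[OF L sv_pos])
qed

end


context samp begin

abbreviation "\<Omega> \<equiv> sampler_space n (length us)"

lemma Zc_Inl: "u < n \<Longrightarrow> Zc n (length us) (Inl u) = (\<lambda>\<omega>. fst \<omega> u)"
  by (auto simp: Zc_def)

lemma Zc_Inr: "i < length us \<Longrightarrow> Zc n (length us) (Inr i) = (\<lambda>\<omega>. snd \<omega> i)"
  by (auto simp: Zc_def)

lemma distr_fst: "u < n \<Longrightarrow> distr \<Omega> borel (\<lambda>\<omega>. fst \<omega> u) = UM"
  using distr_Zc[of "Inl u" n "length us"] by (simp add: Zc_Inl KK_def NN_def)

lemma snd_distributed:
  assumes i: "i < length us"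
  shows "distributed \<Omega> lborel (\<lambda>\<omega>. snd \<omega> i) (exponential_density 1)"
  unfolding distributed_def
proof (intro conjI)
  have "distr \<Omega> lborel (\<lambda>\<omega>. snd \<omega> i) = distr \<Omega> borel (Zc n (length us) (Inr i))"
    by (rule distr_cong) (auto simp: Zc_def i)
  also have "\<dots> = EM" using distr_Zc[of "Inr i" n "length us"] i by (simp add: KK_def NN_def)
  finally show "distr \<Omega> lborel (\<lambda>\<omega>. snd \<omega> i) = density lborel (exponential_density 1)" .
  show "(\<lambda>x. ennreal (exponential_density 1 x)) \<in> borel_measurable lborel"
    unfolding exponential_density_def by measurable
  show "(\<lambda>\<omega>. snd \<omega> i) \<in> measurable \<Omega> lborel"
    using meas_snd_comp[OF i] by simp
qed

lemma scaled_distributed: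
  assumes i: "i < length us"
  shows "distributed \<Omega> lborel (\<lambda>\<omega>. snd \<omega> i / di i) (exponential_density (di i))"
proof -
  interpret \<Omega>: prob_space \<Omega> by (rule prob_sampler)
  have d: "0 < di i" using di_pos[OF i] .
  have "distributed \<Omega> lborel (\<lambda>\<omega>. (1 / di i) * snd \<omega> i) (erlang_density 0 (1 / (1 / di i)))"
    by (rule \<Omega>.erlang_distributed_mult_const[OF snd_distributed[OF i]]) (use d in auto)
  then show ?thesis by (simp add: d)
qed

definition W :: "nat + nat \<Rightarrow> (nat \<Rightarrow> real) \<times> (nat \<Rightarrow> real) \<Rightarrow> real" where
  "W k \<omega> = (case k of Inl u \<Rightarrow> Zc n (length us) k \<omega> | Inr i \<Rightarrow> Zc n (length us) k \<omega> / di i)"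

lemma W_indep: "prob_space.indep_vars \<Omega> (\<lambda>_. borel) W (KK n (length us))"
proof -
  interpret \<Omega>: prob_space \<Omega> by (rule prob_sampler)
  define Yk where "Yk k x = (case k of Inl u \<Rightarrow> x | Inr i \<Rightarrow> x / di i)" for k :: "nat + nat" and x :: real
  have "\<Omega>.indep_vars (\<lambda>_. borel) (\<lambda>k x. Yk k (Zc n (length us) k x)) (KK n (length us))"
  proof (rule \<Omega>.indep_vars_compose2[OF Zc_indep[OF npos]])
    fix k show "Yk k \<in> borel_measurable borel" unfolding Yk_def by (cases k) auto
  qed
  moreover have "(\<lambda>k x. Yk k (Zc n (length us) k x)) = W"
    unfolding Yk_def W_def by (auto split: sum.split)
  ultimately show ?thesis by simp
qed

lemma W_Inl: "u < n \<Longrightarrow> W (Inl u) = (\<lambda>\<omega>. fst \<omega> u)"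
  unfolding W_def by (auto simp: Zc_def)

lemma W_Inr: "i < length us \<Longrightarrow> W (Inr i) = (\<lambda>\<omega>. snd \<omega> i / di i)"
  unfolding W_def by (auto simp: Zc_def)

definition Am where "Am u \<omega> = Min ((\<lambda>i. snd \<omega> i / di i) ` Iu u)"

lemma Am_W: "Am u \<omega> = Min ((\<lambda>k. W k \<omega>) ` (Inr ` Iu u))"
proof -
  have "(\<lambda>k. W k \<omega>) ` (Inr ` Iu u) = (\<lambda>i. snd \<omega> i / di i) ` Iu u"
    unfolding image_image by (rule image_cong) (auto simp: Iu_def W_Inr)
  then show ?thesis unfolding Am_def by simp
qed

lemma KK_sub: "u < n \<Longrightarrow> insert (Inl u) (Inr ` Iu u) \<subseteq> KK n (length us)"
  unfolding KK_def Iu_def by auto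

lemma UA_indep:
  assumes u: "u < n"
  shows "prob_space.indep_var \<Omega> borel (\<lambda>\<omega>. fst \<omega> u) borel (Am u)"
proof -
  interpret \<Omega>: prob_space \<Omega> by (rule prob_sampler)
  have I: "\<Omega>.indep_vars (\<lambda>_. borel) W (insert (Inl u) (Inr ` Iu u))"
    by (rule \<Omega>.indep_vars_subset[OF W_indep KK_sub[OF u]])
  have "\<Omega>.indep_var borel (W (Inl u)) borel (\<lambda>\<omega>. Min ((\<lambda>k. W k \<omega>) ` (Inr ` Iu u)))"
    by (rule \<Omega>.indep_vars_Min[OF _ _ I]) (auto simp: finite_Iu)
  then show ?thesis unfolding W_Inl[OF u] Am_W[symmetric] by (simp add: fun_eq_iff)
qed

lemma A_distributed:
  assumes u: "u < n" and ne: "Iu u \<noteq> {}"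
  shows "distributed \<Omega> lborel (Am u) (exponential_density (stream_vec us u))"
proof -
  interpret \<Omega>: prob_space \<Omega> by (rule prob_sampler)
  define l where "l k = (case k of Inl _ \<Rightarrow> 1 | Inr i \<Rightarrow> di i)" for k :: "nat + nat"
  have I: "\<Omega>.indep_vars (\<lambda>_. borel) W (Inr ` Iu u)"
    by (rule \<Omega>.indep_vars_subset[OF W_indep]) (use KK_sub[OF u] in auto)
  have lpos: "0 < l k" if "k \<in> Inr ` Iu u" for k
    using that di_pos unfolding l_def Iu_def by auto
  have ld: "distributed \<Omega> lborel (W k) (exponential_density (l k))" if k: "k \<in> Inr ` Iu u" for k
  proof -
    obtain i where i: "k = Inr i" "i < length us" using k unfolding Iu_def by auto
    show ?thesis using scaled_distributed[OF i(2)] i unfolding l_def by (simp add: W_Inr)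
  qed
  have fin: "finite (Inr ` Iu u)" using finite_Iu by simp
  have ne': "Inr ` Iu u \<noteq> {}" using ne by simp
  have "distributed \<Omega> lborel (\<lambda>x. Min ((\<lambda>k. W k x) ` (Inr ` Iu u))) (exponential_density (\<Sum>k\<in>Inr ` Iu u. l k))"
    using \<Omega>.exponential_distributed_Min[where l=l, OF fin ne' lpos ld I] .
  moreover have "(\<Sum>k\<in>Inr ` Iu u. l k) = stream_vec us u"
    unfolding sv_sum l_def by (subst sum.reindex) auto
  ultimately show ?thesis unfolding Am_W[abs_def] by simp
qed

end


lemma emeasure_UM_atMost:
  assumes "0 \<le> c" "c \<le> 1"
  shows "emeasure UM {..c} = ennreal c"
proof -
  have "emeasure UM {..c} = emeasure lborel ({0..1} \<inter> {..c}) / emeasure lborel {0..1::real}"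
    by (rule emeasure_uniform_measure) auto
  also have "{0..1} \<inter> {..c} = {0..c}" using assms by auto
  finally show ?thesis using assms by (simp add: divide_ennreal_def)
qed

context samp begin

lemma UA_prob:
  assumes u: "u < n" and ne: "Iu u \<noteq> {}" and s: "0 \<le> s"
  shows "measure \<Omega> {\<omega>\<in>space \<Omega>. fst \<omega> u \<le> Fm M X (Am u \<omega>) s} = 1 - exp (- (s * lam u))"
proof -
  interpret \<Omega>: prob_space \<Omega> by (rule prob_sampler)
  define x where "x = stream_vec us u"
  have x: "0 < x" unfolding x_def by (rule sv_pos[OF ne])
  define DA where "DA = density lborel (exponential_density x)"
  have Ad: "distributed \<Omega> lborel (Am u) (exponential_density x)"
    unfolding x_def by (rule A_distributed[OF u ne])
  have Am[measurable]: "Am u \<in> borel_measurable \<Omega>"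
    using distributed_measurable[OF Ad] by simp
  have Um[measurable]: "(\<lambda>\<omega>. fst \<omega> u) \<in> borel_measurable \<Omega>" using meas_fst_comp[OF u] .
  have Fmm[measurable]: "(\<lambda>a. Fm M X a s) \<in> borel_measurable borel" by (rule Fm_meas_a[OF L s])
  interpret U: prob_space UM by (rule prob_UM)
  interpret D: prob_space DA unfolding DA_def by (rule prob_space_exponential_density[OF x])
  interpret UD: pair_prob_space UM DA ..
  have dU: "distr \<Omega> borel (\<lambda>\<omega>. fst \<omega> u) = UM" by (rule distr_fst[OF u])
  have dA: "distr \<Omega> borel (Am u) = DA"
    unfolding DA_def distributed_distr_eq_density[OF Ad, symmetric] by (rule distr_cong) auto
  have jd: "distr \<Omega> (borel \<Otimes>\<^sub>M borel) (\<lambda>\<omega>. (fst \<omega> u, Am u \<omega>)) = UM \<Otimes>\<^sub>M DA"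
    using UA_indep[OF u] unfolding \<Omega>.indep_var_distribution_eq dU dA by simp
  define E where "E = {p :: real \<times> real. fst p \<le> Fm M X (snd p) s}"
  have E0: "{p \<in> space (borel \<Otimes>\<^sub>M borel). fst p \<le> Fm M X (snd p) s} \<in> sets (borel \<Otimes>\<^sub>M (borel :: real measure))"
    by measurable
  have E: "E \<in> sets (borel \<Otimes>\<^sub>M borel)" using E0 unfolding E_def by (simp add: space_pair_measure)
  have m: "(\<lambda>\<omega>. (fst \<omega> u, Am u \<omega>)) \<in> measurable \<Omega> (borel \<Otimes>\<^sub>M borel)" by measurable
  have v: "(\<lambda>\<omega>. (fst \<omega> u, Am u \<omega>)) -` E \<inter> space \<Omega> = {\<omega>\<in>space \<Omega>. fst \<omega> u \<le> Fm M X (Am u \<omega>) s}"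
    unfolding E_def by auto
  have e1: "emeasure (distr \<Omega> (borel \<Otimes>\<^sub>M borel) (\<lambda>\<omega>. (fst \<omega> u, Am u \<omega>))) E =
      emeasure \<Omega> ((\<lambda>\<omega>. (fst \<omega> u, Am u \<omega>)) -` E \<inter> space \<Omega>)"
    by (rule emeasure_distr[OF m E])
  have ES: "E \<in> sets (UM \<Otimes>\<^sub>M DA)"
  proof -
    have "sets (UM \<Otimes>\<^sub>M DA) = sets (borel \<Otimes>\<^sub>M borel)"
      by (rule sets_pair_measure_cong) (simp_all add: DA_def)
    then show ?thesis using E by (simp only:)
  qed
  have "emeasure \<Omega> {\<omega>\<in>space \<Omega>. fst \<omega> u \<le> Fm M X (Am u \<omega>) s} = emeasure (UM \<Otimes>\<^sub>M DA) E"
    using e1 unfolding v jd by simp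
  also have "\<dots> = (\<integral>\<^sup>+a. emeasure UM ((\<lambda>b. (b, a)) -` E) \<partial>DA)"
    by (rule UD.emeasure_pair_measure_alt2[OF ES])
  also have "\<dots> = (\<integral>\<^sup>+a. ennreal (Fm M X a s) \<partial>DA)"
  proof (rule nn_integral_cong)
    fix a
    have "(\<lambda>b. (b, a)) -` E = {..Fm M X a s}" unfolding E_def by auto
    then show "emeasure UM ((\<lambda>b. (b, a)) -` E) = ennreal (Fm M X a s)"
      using emeasure_UM_atMost[OF Fm_range[OF L s]] by simp
  qed
  also have "\<dots> = ennreal (1 - exp (- (s * G x)))"
    unfolding DA_def by (rule Fm_exp_nn_integral[OF L x s])
  finally have "ennreal (measure \<Omega> {\<omega>\<in>space \<Omega>. fst \<omega> u \<le> Fm M X (Am u \<omega>) s}) = ennreal (1 - exp (- (s * G x)))"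
    by (simp only: \<Omega>.emeasure_eq_measure)
  moreover have "0 \<le> 1 - exp (- (s * G x))"
    using G_nonneg[OF L x] s by (simp add: mult_nonneg_nonneg)
  ultimately show ?thesis unfolding lam_def x_def[symmetric] by (subst (asm) ennreal_inj) auto
qed

lemma T_Am:
  assumes u: "u < n" and ne: "Iu u \<noteq> {}"
  shows "T u \<omega> = levy_level M X (Am u \<omega>) (fst \<omega> u)"
proof -
  have "T u \<omega> = (INF i\<in>Iu u. levy_level M X (snd \<omega> i / di i) (fst \<omega> u))"
    unfolding T_def hv_def by (rule INF_cong) (auto simp: Iu_def)
  also have "\<dots> = levy_level M X (Min ((\<lambda>i. snd \<omega> i / di i) ` Iu u)) (fst \<omega> u)"
    by (rule INF_level_Min[OF L finite_Iu ne])
  finally show ?thesis unfolding Am_def .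
qed

lemma inv_Suc_lim: "(\<lambda>k. 1 / real (Suc k)) \<longlonglongrightarrow> 0"
  using LIMSEQ_inverse_real_of_nat by (simp add: inverse_eq_divide)

lemma T_dist:
  assumes u: "u < n" and t: "0 \<le> t"
  shows "measure \<Omega> {\<omega>\<in>space \<Omega>. T u \<omega> \<le> ennreal t} = 1 - exp (- (t * lam u))"
proof (cases "Iu u = {}")
  case True
  then show ?thesis by (simp add: T_empty lam_empty top_unique)
next
  case ne: False
  interpret \<Omega>: prob_space \<Omega> by (rule prob_sampler)
  have Am[measurable]: "Am u \<in> borel_measurable \<Omega>"
    using distributed_measurable[OF A_distributed[OF u ne]] by simp
  have Um[measurable]: "(\<lambda>\<omega>. fst \<omega> u) \<in> borel_measurable \<Omega>" using meas_fst_comp[OF u] .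
  define B where "B k = {\<omega>\<in>space \<Omega>. fst \<omega> u \<le> Fm M X (Am u \<omega>) (t + 1 / real (Suc k))}" for k
  have eq: "{\<omega>\<in>space \<Omega>. T u \<omega> \<le> ennreal t} = (\<Inter>k. B k)"
    unfolding B_def T_Am[OF u ne] level_le_iff[OF L t] by auto
  have Bs: "range B \<subseteq> sets \<Omega>"
  proof safe
    fix k
    have [measurable]: "(\<lambda>a. Fm M X a (t + 1 / real (Suc k))) \<in> borel_measurable borel"
      by (rule Fm_meas_a[OF L]) (use t in auto)
    show "B k \<in> sets \<Omega>" unfolding B_def by measurable
  qed
  have Bd: "decseq B"
  proof (rule decseq_SucI)
    fix k
    have le: "t + 1 / real (Suc (Suc k)) \<le> t + 1 / real (Suc k)" by (simp add: frac_le)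
    have "Fm M X a (t + 1 / real (Suc (Suc k))) \<le> Fm M X a (t + 1 / real (Suc k))" for a
      using Fm_mono_t[OF L _ le] t by simp
    then show "B (Suc k) \<subseteq> B k" unfolding B_def by (auto intro: order_trans)
  qed
  have lim1: "(\<lambda>k. measure \<Omega> (B k)) \<longlonglongrightarrow> measure \<Omega> (\<Inter>k. B k)"
    by (rule \<Omega>.finite_Lim_measure_decseq[OF Bs Bd])
  have mB: "measure \<Omega> (B k) = 1 - exp (- ((t + 1 / real (Suc k)) * lam u))" for k
    unfolding B_def by (rule UA_prob[OF u ne]) (use t in auto)
  have lim2: "(\<lambda>k. measure \<Omega> (B k)) \<longlonglongrightarrow> 1 - exp (- ((t + 0) * lam u))"
    unfolding mB by (intro tendsto_intros inv_Suc_lim)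
  show ?thesis using LIMSEQ_unique[OF lim1 lim2] eq by simp
qed

end


context samp begin

definition KU where "KU u = insert (Inl u) (Inr ` Iu u)"

definition gU where "gU u f = (INF i\<in>Iu u. levy_level M X (f (Inr i) / di i) (f (Inl u)))"

lemma gU_meas: "gU u \<in> borel_measurable (\<Pi>\<^sub>M k\<in>KU u. (borel :: real measure))"
  unfolding gU_def
proof (rule borel_measurable_INF)
  show "countable (Iu u)" using finite_Iu by (rule countable_finite)
  fix i assume i: "i \<in> Iu u"
  show "(\<lambda>f. levy_level M X (f (Inr i) / di i) (f (Inl u))) \<in> borel_measurable (\<Pi>\<^sub>M k\<in>KU u. borel)"
  proof (rule level_meas[OF L])
    have "(\<lambda>f. f (Inr i)) \<in> borel_measurable (\<Pi>\<^sub>M k\<in>KU u. (borel :: real measure))"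
      by (rule measurable_component_singleton) (use i in \<open>simp add: KU_def\<close>)
    then show "(\<lambda>f. f (Inr i) / di i) \<in> borel_measurable (\<Pi>\<^sub>M k\<in>KU u. (borel :: real measure))" by measurable
    show "(\<lambda>f. f (Inl u)) \<in> borel_measurable (\<Pi>\<^sub>M k\<in>KU u. (borel :: real measure))"
      by (rule measurable_component_singleton) (simp add: KU_def)
  qed
qed

lemma T_indep: "prob_space.indep_vars \<Omega> (\<lambda>_. borel) T {..<n}"
proof -
  interpret \<Omega>: prob_space \<Omega> by (rule prob_sampler)
  have disj: "disjoint_family_on KU {..<n}"
    unfolding disjoint_family_on_def KU_def Iu_def by auto
  have sub: "\<And>u. u \<in> {..<n} \<Longrightarrow> KU u \<subseteq> KK n (length us)"
    using KK_sub unfolding KU_def by auto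
  have I1: "\<Omega>.indep_vars (\<lambda>u. \<Pi>\<^sub>M k\<in>KU u. borel) (\<lambda>u \<omega>. restrict (\<lambda>k. Zc n (length us) k \<omega>) (KU u)) {..<n}"
    by (rule \<Omega>.indep_vars_restrict[OF Zc_indep[OF npos] sub disj])
  have I2: "\<Omega>.indep_vars (\<lambda>_. borel) (\<lambda>u \<omega>. gU u (restrict (\<lambda>k. Zc n (length us) k \<omega>) (KU u))) {..<n}"
    by (rule \<Omega>.indep_vars_compose2[OF I1 gU_meas])
  have eq: "(\<lambda>\<omega>. gU u (restrict (\<lambda>k. Zc n (length us) k \<omega>) (KU u))) = T u" if u: "u \<in> {..<n}" for u
  proof
    fix \<omega>
    show "gU u (restrict (\<lambda>k. Zc n (length us) k \<omega>) (KU u)) = T u \<omega>"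
      unfolding gU_def T_def
    proof (rule INF_cong)
      fix i assume i: "i \<in> Iu u"
      then have "i < length us" "vi i = u" unfolding Iu_def by auto
      then show "levy_level M X (restrict (\<lambda>k. Zc n (length us) k \<omega>) (KU u) (Inr i) / di i)
          (restrict (\<lambda>k. Zc n (length us) k \<omega>) (KU u) (Inl u)) = hv \<omega> i"
        using i u unfolding hv_def KU_def by (simp add: Zc_def)
    qed simp
  qed
  show ?thesis using I2 by (rule \<Omega>.indep_vars_cong[THEN iffD1, rotated -1]) (auto simp: eq)
qed

lemma T_lt_top_sets: "{\<omega>\<in>space \<Omega>. T u \<omega> \<noteq> \<top>} = (\<Union>k::nat. {\<omega>\<in>space \<Omega>. T u \<omega> \<le> ennreal (real k)})"
proof (intro set_eqI iffI)
  fix \<omega> assume "\<omega> \<in> {\<omega>\<in>space \<Omega>. T u \<omega> \<noteq> \<top>}"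
  then obtain r where r: "T u \<omega> = ennreal r" "0 \<le> r" "\<omega> \<in> space \<Omega>" by (cases "T u \<omega>") auto
  obtain k :: nat where "r \<le> real k" using real_arch_simple by blast
  then show "\<omega> \<in> (\<Union>k::nat. {\<omega>\<in>space \<Omega>. T u \<omega> \<le> ennreal (real k)})" using r by (auto intro!: ennreal_leI)
qed (auto simp: top_unique)

lemma AE_T_top:
  assumes u: "u < n" and l: "lam u = 0"
  shows "AE \<omega> in \<Omega>. T u \<omega> = \<top>"
proof -
  interpret \<Omega>: prob_space \<Omega> by (rule prob_sampler)
  have "(\<Union>k::nat. {\<omega>\<in>space \<Omega>. T u \<omega> \<le> ennreal (real k)}) \<in> null_sets \<Omega>"
  proof (rule null_sets_UN)
    fix k :: nat
    have "measure \<Omega> {\<omega>\<in>space \<Omega>. T u \<omega> \<le> ennreal (real k)} = 0"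
      using T_dist[OF u, of "real k"] l by simp
    moreover have "{\<omega>\<in>space \<Omega>. T u \<omega> \<le> ennreal (real k)} \<in> sets \<Omega>" by measurable
    ultimately show "{\<omega>\<in>space \<Omega>. T u \<omega> \<le> ennreal (real k)} \<in> null_sets \<Omega>"
      by (simp add: \<Omega>.emeasure_eq_measure null_sets_def)
  qed
  then show ?thesis by (rule AE_I') (use T_lt_top_sets in auto)
qed

lemma AE_T_fin:
  assumes u: "u < n" and l: "0 < lam u"
  shows "AE \<omega> in \<Omega>. T u \<omega> \<noteq> \<top>"
proof -
  interpret \<Omega>: prob_space \<Omega> by (rule prob_sampler)
  define N where "N = {\<omega>\<in>space \<Omega>. T u \<omega> = \<top>}"
  have Ns: "N \<in> sets \<Omega>" unfolding N_def by measurable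
  have bound: "measure \<Omega> N \<le> exp (- lam u) ^ k" for k :: nat
  proof -
    have Ss: "{\<omega>\<in>space \<Omega>. T u \<omega> \<le> ennreal (real k)} \<in> sets \<Omega>" by measurable
    have "N \<subseteq> space \<Omega> - {\<omega>\<in>space \<Omega>. T u \<omega> \<le> ennreal (real k)}"
      unfolding N_def by (auto simp: top_unique)
    then have "measure \<Omega> N \<le> measure \<Omega> (space \<Omega> - {\<omega>\<in>space \<Omega>. T u \<omega> \<le> ennreal (real k)})"
      by (intro \<Omega>.finite_measure_mono) (use Ss in auto)
    also have "\<dots> = 1 - (1 - exp (- (real k * lam u)))"
      using T_dist[OF u, of "real k"] Ss by (simp add: \<Omega>.prob_compl)
    also have "\<dots> = exp (- lam u) ^ k"
      using exp_of_nat_mult[of k "- lam u"] by simp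
    finally show ?thesis .
  qed
  have lim: "(\<lambda>k. exp (- lam u) ^ k) \<longlonglongrightarrow> 0"
    by (rule LIMSEQ_power_zero) (use l in simp)
  have "measure \<Omega> N \<le> 0"
    by (rule LIMSEQ_le_const[OF lim]) (use bound in auto)
  then have "N \<in> null_sets \<Omega>" using Ns by (simp add: \<Omega>.emeasure_eq_measure null_sets_def measure_le_0_iff)
  then show ?thesis by (rule AE_I') (auto simp: N_def)
qed

end


context samp begin

definition R where "R u \<omega> = enn2real (T u \<omega>)"

lemma R_meas[measurable]: "R u \<in> borel_measurable \<Omega>"
  unfolding R_def by measurable

lemma R_indep: "prob_space.indep_vars \<Omega> (\<lambda>_. borel) R {..<n}"
proof -
  interpret \<Omega>: prob_space \<Omega> by (rule prob_sampler)
  have "\<Omega>.indep_vars (\<lambda>_. borel) (\<lambda>u \<omega>. enn2real (T u \<omega>)) {..<n}"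
    by (rule \<Omega>.indep_vars_compose2[OF T_indep]) measurable
  then show ?thesis unfolding R_def[abs_def] .
qed

lemma R_distributed:
  assumes u: "u < n" and l: "0 < lam u"
  shows "distributed \<Omega> lborel (R u) (exponential_density (lam u))"
proof -
  interpret \<Omega>: prob_space \<Omega> by (rule prob_sampler)
  have "R u \<in> borel_measurable \<Omega> \<and> (\<forall>a\<ge>0. \<Omega>.prob {x \<in> space \<Omega>. R u x \<le> a} = 1 - exp (- a * lam u))"
  proof (intro conjI allI impI)
    show "R u \<in> borel_measurable \<Omega>" by (rule R_meas)
    fix a :: real assume a: "0 \<le> a"
    have "\<Omega>.prob {x \<in> space \<Omega>. R u x \<le> a} = \<Omega>.prob {x \<in> space \<Omega>. T u x \<le> ennreal a}"
    proof (rule measure_eq_AE)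
      show "AE x in \<Omega>. (x \<in> {x \<in> space \<Omega>. R u x \<le> a}) = (x \<in> {x \<in> space \<Omega>. T u x \<le> ennreal a})"
        using AE_T_fin[OF u l]
      proof eventually_elim
        case (elim x)
        then obtain r where r: "T u x = ennreal r" "0 \<le> r" by (cases "T u x") auto
        then show ?case using a unfolding R_def by simp
      qed
    qed measurable
    also have "\<dots> = 1 - exp (- (a * lam u))" by (rule T_dist[OF u a])
    finally show "\<Omega>.prob {x \<in> space \<Omega>. R u x \<le> a} = 1 - exp (- a * lam u)" by simp
  qed
  then show ?thesis using \<Omega>.exponential_distributed_iff[OF l] by simp
qed

lemma E_lower:
  assumes v: "v < n" and \<omega>: "\<omega> \<in> space \<Omega>"
    and Tv: "T v \<omega> < \<top>" and lt: "\<forall>w\<in>{..<n}-{v}. T v \<omega> < T w \<omega>"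
  shows "\<exists>j<length us. vi j = v \<and> hv \<omega> j < \<top> \<and> (\<forall>i<j. hv \<omega> j < hv \<omega> i) \<and> (\<forall>i<length us. hv \<omega> j \<le> hv \<omega> i)"
proof -
  have ne: "Iu v \<noteq> {}"
  proof
    assume "Iu v = {}"
    then have "T v \<omega> = \<top>" by (rule T_empty)
    then show False using Tv by simp
  qed
  then have m: "{..<length us} \<noteq> {}" unfolding Iu_def by auto
  define \<mu> where "\<mu> = Min ((\<lambda>i. hv \<omega> i) ` {..<length us})"
  have \<mu>le: "\<mu> \<le> hv \<omega> i" if "i < length us" for i unfolding \<mu>_def using that by simp
  have "\<mu> \<in> (\<lambda>i. hv \<omega> i) ` {..<length us}" unfolding \<mu>_def using m by (intro Min_in) auto
  then obtain i0 where i0: "i0 < length us" "hv \<omega> i0 = \<mu>" by auto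
  have Tle: "T w \<omega> \<le> hv \<omega> i" if "i < length us" "vi i = w" for i w
    unfolding T_def by (rule INF_lower) (use that in \<open>auto simp: Iu_def\<close>)
  have vi0: "vi i0 = v"
  proof (rule ccontr)
    assume "vi i0 \<noteq> v"
    then have "T v \<omega> < T (vi i0) \<omega>" using lt vi_lt[OF i0(1)] by auto
    also have "\<dots> \<le> \<mu>" using Tle[OF i0(1) refl] i0(2) by simp
    also have "\<mu> \<le> T v \<omega>" unfolding T_def by (rule INF_greatest) (auto simp: Iu_def intro: \<mu>le)
    finally show False by simp
  qed
  have Tv\<mu>: "T v \<omega> = \<mu>"
  proof (rule antisym)
    show "T v \<omega> \<le> \<mu>" using Tle[OF i0(1) vi0] i0(2) by simp
    show "\<mu> \<le> T v \<omega>" unfolding T_def by (rule INF_greatest) (auto simp: Iu_def intro: \<mu>le)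
  qed
  define j where "j = (LEAST i. i < length us \<and> hv \<omega> i = \<mu>)"
  have j: "j < length us" "hv \<omega> j = \<mu>"
    using LeastI[of "\<lambda>i. i < length us \<and> hv \<omega> i = \<mu>" i0] i0 unfolding j_def by auto
  have jmin: "\<not> (i < length us \<and> hv \<omega> i = \<mu>)" if "i < j" for i
    using not_less_Least[of i "\<lambda>i. i < length us \<and> hv \<omega> i = \<mu>"] that unfolding j_def by auto
  have vj: "vi j = v"
  proof (rule ccontr)
    assume "vi j \<noteq> v"
    then have "T v \<omega> < T (vi j) \<omega>" using lt vi_lt[OF j(1)] by auto
    also have "\<dots> \<le> \<mu>" using Tle[OF j(1) refl] j(2) by simp
    finally show False using Tv\<mu> by simp
  qed
  show ?thesis
  proof (intro exI[of _ j] conjI allI impI)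
    show "j < length us" "vi j = v" by fact+
    show "hv \<omega> j < \<top>" using j(2) Tv\<mu> Tv by simp
    fix i
    show "i < j \<Longrightarrow> hv \<omega> j < hv \<omega> i"
    proof -
      assume ij: "i < j"
      then have "i < length us" using j(1) by simp
      then have "\<mu> \<le> hv \<omega> i" "hv \<omega> i \<noteq> \<mu>" using jmin[OF ij] \<mu>le by auto
      then show ?thesis using j(2) by (simp add: order.not_eq_order_implies_strict)
    qed
    show "i < length us \<Longrightarrow> hv \<omega> j \<le> hv \<omega> i" using \<mu>le j(2) by simp
  qed
qed

lemma E_upper:
  assumes v: "v < n"
    and j: "j < length us" "vi j = v" "hv \<omega> j < \<top>" "\<forall>i<length us. hv \<omega> j \<le> hv \<omega> i"
  shows "T v \<omega> < \<top> \<and> (\<forall>w\<in>{..<n}. T v \<omega> \<le> T w \<omega>)"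
proof -
  have Tvj: "T v \<omega> \<le> hv \<omega> j" unfolding T_def by (rule INF_lower) (use j in \<open>auto simp: Iu_def\<close>)
  have "hv \<omega> j \<le> T w \<omega>" for w unfolding T_def by (rule INF_greatest) (use j in \<open>auto simp: Iu_def\<close>)
  then show ?thesis using Tvj j(3) by (auto intro: order_trans le_less_trans)
qed

end


context samp begin

lemma E_values:
  assumes v: "v < n"
  shows "measure \<Omega> {\<omega>\<in>space \<Omega>. T v \<omega> < \<top> \<and> (\<forall>w\<in>{..<n}-{v}. T v \<omega> < T w \<omega>)} = lam v / (\<Sum>u<n. lam u)"
    and "measure \<Omega> {\<omega>\<in>space \<Omega>. T v \<omega> < \<top> \<and> (\<forall>w\<in>{..<n}. T v \<omega> \<le> T w \<omega>)} = lam v / (\<Sum>u<n. lam u)"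
proof -
  interpret \<Omega>: prob_space \<Omega> by (rule prob_sampler)
  define E1 where "E1 = {\<omega>\<in>space \<Omega>. T v \<omega> < \<top> \<and> (\<forall>w\<in>{..<n}-{v}. T v \<omega> < T w \<omega>)}"
  define E2 where "E2 = {\<omega>\<in>space \<Omega>. T v \<omega> < \<top> \<and> (\<forall>w\<in>{..<n}. T v \<omega> \<le> T w \<omega>)}"
  have A1: "{\<omega>\<in>space \<Omega>. \<forall>w\<in>{..<n}-{v}. T v \<omega> < T w \<omega>} \<in> sets \<Omega>"
  proof (rule sets.sets_Collect_finite_All)
    fix w show "{\<omega>\<in>space \<Omega>. T v \<omega> < T w \<omega>} \<in> sets \<Omega>" by measurable
  qed simp
  have A2: "{\<omega>\<in>space \<Omega>. \<forall>w\<in>{..<n}. T v \<omega> \<le> T w \<omega>} \<in> sets \<Omega>"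
  proof (rule sets.sets_Collect_finite_All)
    fix w show "{\<omega>\<in>space \<Omega>. T v \<omega> \<le> T w \<omega>} \<in> sets \<Omega>" by measurable
  qed simp
  have A0: "{\<omega>\<in>space \<Omega>. T v \<omega> < \<top>} \<in> sets \<Omega>" by measurable
  have E1s: "E1 \<in> sets \<Omega>"
  proof -
    have "E1 = {\<omega>\<in>space \<Omega>. T v \<omega> < \<top>} \<inter> {\<omega>\<in>space \<Omega>. \<forall>w\<in>{..<n}-{v}. T v \<omega> < T w \<omega>}"
      unfolding E1_def by auto
    then show ?thesis using A0 A1 by simp
  qed
  have E2s: "E2 \<in> sets \<Omega>"
  proof -
    have "E2 = {\<omega>\<in>space \<Omega>. T v \<omega> < \<top>} \<inter> {\<omega>\<in>space \<Omega>. \<forall>w\<in>{..<n}. T v \<omega> \<le> T w \<omega>}"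
      unfolding E2_def by auto
    then show ?thesis using A0 A2 by simp
  qed
  have E12: "E1 \<subseteq> E2" unfolding E1_def E2_def by (auto simp: order.order_iff_strict)
  define \<Lambda> where "\<Lambda> = (\<Sum>u<n. lam u)"
  have "measure \<Omega> E1 = lam v / \<Lambda> \<and> measure \<Omega> E2 = lam v / \<Lambda>"
  proof (cases "lam v = 0")
    case True
    have "AE \<omega> in \<Omega>. T v \<omega> = \<top>" by (rule AE_T_top[OF v True])
    then have "AE \<omega> in \<Omega>. \<omega> \<notin> E2" by eventually_elim (auto simp: E2_def)
    then have "E2 \<in> null_sets \<Omega>" using E2s by (simp add: AE_iff_null_sets)
    then have m2: "measure \<Omega> E2 = 0" by (simp add: \<Omega>.emeasure_eq_measure null_sets_def)
    have "measure \<Omega> E1 \<le> measure \<Omega> E2" by (rule \<Omega>.finite_measure_mono[OF E12 E2s])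
    then have "measure \<Omega> E1 = 0" using m2 by (simp add: order.antisym)
    then show ?thesis using m2 True by simp
  next
    case False
    then have lv: "0 < lam v" using lam_nonneg[of v] by simp
    define S where "S = {w\<in>{..<n}. w \<noteq> v \<and> 0 < lam w}"
    define Z where "Z = {w\<in>{..<n}. lam w = 0}"
    have finS: "finite S" unfolding S_def by simp
    have finZ: "finite Z" unfolding Z_def by simp
    have split: "{..<n} - {v} = S \<union> Z" unfolding S_def Z_def using lam_nonneg lv
      by (auto simp: order.order_iff_strict)
    have vS: "v \<notin> S" unfolding S_def by simp
    have AEgood: "AE \<omega> in \<Omega>. T v \<omega> \<noteq> \<top> \<and> (\<forall>w\<in>S. T w \<omega> \<noteq> \<top>) \<and> (\<forall>w\<in>Z. T w \<omega> = \<top>)"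
    proof -
      have "AE \<omega> in \<Omega>. T v \<omega> \<noteq> \<top>" by (rule AE_T_fin[OF v lv])
      moreover have "AE \<omega> in \<Omega>. \<forall>w\<in>S. T w \<omega> \<noteq> \<top>"
        by (rule AE_finite_allI[OF finS]) (rule AE_T_fin, auto simp: S_def)
      moreover have "AE \<omega> in \<Omega>. \<forall>w\<in>Z. T w \<omega> = \<top>"
        by (rule AE_finite_allI[OF finZ]) (rule AE_T_top, auto simp: Z_def)
      ultimately show ?thesis by eventually_elim auto
    qed
    have \<Lambda>eq: "\<Lambda> = lam v + (\<Sum>w\<in>S. lam w)"
    proof -
      have "\<Lambda> = (\<Sum>w\<in>insert v S. lam w)"
        unfolding \<Lambda>_def
      proof (rule sum.mono_neutral_right)
        show "insert v S \<subseteq> {..<n}" using v unfolding S_def by auto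
        show "\<forall>i\<in>{..<n} - insert v S. lam i = 0"
          using lam_nonneg unfolding S_def by (auto simp: order.order_iff_strict)
      qed simp
      also have "\<dots> = lam v + (\<Sum>w\<in>S. lam w)" using finS vS by simp
      finally show ?thesis .
    qed
    show ?thesis
    proof (cases "S = {}")
      case True
      have "AE \<omega> in \<Omega>. \<omega> \<in> E1 \<longleftrightarrow> \<omega> \<in> space \<Omega>"
        using AEgood
      proof eventually_elim
        case (elim \<omega>)
        show ?case unfolding E1_def split using True elim by (auto simp: less_top)
      qed
      then have "measure \<Omega> E1 = measure \<Omega> (space \<Omega>)" by (rule measure_eq_AE) (use E1s in auto)
      then have m1: "measure \<Omega> E1 = 1" using \<Omega>.prob_space by simp
      have "measure \<Omega> E1 \<le> measure \<Omega> E2" by (rule \<Omega>.finite_measure_mono[OF E12 E2s])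
      then have m2: "measure \<Omega> E2 = 1" using m1 \<Omega>.prob_le_1[of E2] by simp
      have "\<Lambda> = lam v" using \<Lambda>eq True by simp
      then show ?thesis using m1 m2 lv by simp
    next
      case Sne: False
      define Mn where "Mn \<omega> = Min ((\<lambda>w. R w \<omega>) ` S)" for \<omega>
      have sub: "insert v S \<subseteq> {..<n}" using v unfolding S_def by auto
      have ind: "\<Omega>.indep_var borel (R v) borel Mn"
        unfolding Mn_def by (rule \<Omega>.indep_vars_Min[OF finS vS \<Omega>.indep_vars_subset[OF R_indep sub]])
      have lpos: "0 < lam w" if "w \<in> S" for w using that unfolding S_def by auto
      have Rd: "distributed \<Omega> lborel (R w) (exponential_density (lam w))" if "w \<in> S" for w
        using that unfolding S_def by (intro R_distributed) auto
      have Sind: "\<Omega>.indep_vars (\<lambda>_. borel) R S"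
        by (rule \<Omega>.indep_vars_subset[OF R_indep]) (use sub in auto)
      have Md: "distributed \<Omega> lborel Mn (exponential_density (\<Sum>w\<in>S. lam w))"
        unfolding Mn_def using \<Omega>.exponential_distributed_Min[where l=lam, OF finS Sne lpos Rd Sind] .
      have Spos: "0 < (\<Sum>w\<in>S. lam w)" using finS Sne lpos by (intro sum_pos) auto
      have Rvd: "distributed \<Omega> lborel (R v) (exponential_density (lam v))" by (rule R_distributed[OF v lv])
      have p1: "\<Omega>.prob {\<omega>\<in>space \<Omega>. R v \<omega> < Mn \<omega>} = lam v / (lam v + (\<Sum>w\<in>S. lam w))"
        by (rule \<Omega>.exp_race_less[OF lv Spos Rvd Md ind])
      have p2: "\<Omega>.prob {\<omega>\<in>space \<Omega>. R v \<omega> \<le> Mn \<omega>} = lam v / (lam v + (\<Sum>w\<in>S. lam w))"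
        by (rule \<Omega>.exp_race_le[OF lv Spos Rvd Md ind])
      have Mnm: "Mn \<in> borel_measurable \<Omega>" using distributed_measurable[OF Md] by simp
      have fin_conv: "T w \<omega> = ennreal (R w \<omega>)" if "T w \<omega> \<noteq> \<top>" for w \<omega>
        using that unfolding R_def by (simp add: less_top)
      have R0: "0 \<le> R w \<omega>" for w \<omega> unfolding R_def by (simp add: enn2real_nonneg)
      have "AE \<omega> in \<Omega>. \<omega> \<in> E1 \<longleftrightarrow> \<omega> \<in> {\<omega>\<in>space \<Omega>. R v \<omega> < Mn \<omega>}"
        using AEgood
      proof eventually_elim
        case (elim \<omega>)
        then have fv: "T v \<omega> = ennreal (R v \<omega>)" by (intro fin_conv) auto
        have "(\<forall>w\<in>{..<n}-{v}. T v \<omega> < T w \<omega>) \<longleftrightarrow> (\<forall>w\<in>S. R v \<omega> < R w \<omega>)"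
        proof -
          have "(\<forall>w\<in>Z. T v \<omega> < T w \<omega>)" using elim fv by auto
          moreover have "T v \<omega> < T w \<omega> \<longleftrightarrow> R v \<omega> < R w \<omega>" if "w \<in> S" for w
            using elim that fv fin_conv[of w \<omega>] R0[of v \<omega>] by (simp add: ennreal_less_iff)
          ultimately show ?thesis unfolding split by auto
        qed
        also have "\<dots> \<longleftrightarrow> R v \<omega> < Mn \<omega>" unfolding Mn_def using finS Sne by simp
        finally show ?case unfolding E1_def using elim by (auto simp: less_top)
      qed
      then have "measure \<Omega> E1 = measure \<Omega> {\<omega>\<in>space \<Omega>. R v \<omega> < Mn \<omega>}"
        by (rule measure_eq_AE) (use E1s Mnm in measurable)
      then have m1: "measure \<Omega> E1 = lam v / \<Lambda>"
        using p1 \<Lambda>eq by simp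
      have "AE \<omega> in \<Omega>. \<omega> \<in> E2 \<longleftrightarrow> \<omega> \<in> {\<omega>\<in>space \<Omega>. R v \<omega> \<le> Mn \<omega>}"
        using AEgood
      proof eventually_elim
        case (elim \<omega>)
        then have fv: "T v \<omega> = ennreal (R v \<omega>)" by (intro fin_conv) auto
        have "(\<forall>w\<in>{..<n}. T v \<omega> \<le> T w \<omega>) \<longleftrightarrow> (\<forall>w\<in>S. R v \<omega> \<le> R w \<omega>)"
        proof -
          have "(\<forall>w\<in>Z. T v \<omega> \<le> T w \<omega>)" using elim fv by auto
          moreover have "T v \<omega> \<le> T w \<omega> \<longleftrightarrow> R v \<omega> \<le> R w \<omega>" if "w \<in> S" for w
            using elim that fv fin_conv[of w \<omega>] R0[of w \<omega>] by simp
          moreover have "{..<n} = insert v (S \<union> Z)" using split v by auto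
          ultimately show ?thesis by auto
        qed
        also have "\<dots> \<longleftrightarrow> R v \<omega> \<le> Mn \<omega>" unfolding Mn_def using finS Sne by simp
        finally show ?case unfolding E2_def using elim by (auto simp: less_top)
      qed
      then have "measure \<Omega> E2 = measure \<Omega> {\<omega>\<in>space \<Omega>. R v \<omega> \<le> Mn \<omega>}"
        by (rule measure_eq_AE) (use E2s Mnm in measurable)
      then have m2: "measure \<Omega> E2 = lam v / \<Lambda>"
        using p2 \<Lambda>eq by simp
      show ?thesis using m1 m2 by simp
    qed
  qed
  then show "measure \<Omega> {\<omega>\<in>space \<Omega>. T v \<omega> < \<top> \<and> (\<forall>w\<in>{..<n}-{v}. T v \<omega> < T w \<omega>)} = lam v / (\<Sum>u<n. lam u)"
    and "measure \<Omega> {\<omega>\<in>space \<Omega>. T v \<omega> < \<top> \<and> (\<forall>w\<in>{..<n}. T v \<omega> \<le> T w \<omega>)} = lam v / (\<Sum>u<n. lam u)"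
    unfolding E1_def E2_def \<Lambda>_def by auto
qed

end


context samp begin

lemma main:
  assumes v: "v < n"
  shows "measure \<Omega> {\<omega>\<in>space \<Omega>. fst (ds_run (levy_level M X) (fst \<omega>) (snd \<omega>) us) = Some v}
    = lam v / (\<Sum>u<n. lam u)"
proof -
  interpret \<Omega>: prob_space \<Omega> by (rule prob_sampler)
  define J where "J = {j. j < length us \<and> vi j = v}"
  define P where "P j \<omega> \<longleftrightarrow> hv \<omega> j < \<top> \<and> (\<forall>i\<in>{..<j}. hv \<omega> j < hv \<omega> i) \<and> (\<forall>i\<in>{..<length us}. hv \<omega> j \<le> hv \<omega> i)" for j \<omega>
  define Ev where "Ev = {\<omega>\<in>space \<Omega>. fst (ds_run (levy_level M X) (fst \<omega>) (snd \<omega>) us) = Some v}"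
  have Ev_eq: "Ev = {\<omega>\<in>space \<Omega>. \<exists>j\<in>J. P j \<omega>}"
    unfolding Ev_def J_def P_def ds_run_char hval_eq vi_def by auto
  have Evs: "Ev \<in> sets \<Omega>"
    unfolding Ev_eq
  proof (rule sets.sets_Collect_finite_Ex)
    show "finite J" unfolding J_def by simp
    fix j assume "j \<in> J"
    then have j: "j < length us" unfolding J_def by simp
    note [measurable] = hv_meas[OF j]
    have a: "{\<omega>\<in>space \<Omega>. hv \<omega> j < \<top>} \<in> sets \<Omega>" by measurable
    have b: "{\<omega>\<in>space \<Omega>. \<forall>i\<in>{..<j}. hv \<omega> j < hv \<omega> i} \<in> sets \<Omega>"
    proof (rule sets.sets_Collect_finite_All)
      fix i assume "i \<in> {..<j}"
      then have "i < length us" using j by simp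
      note [measurable] = hv_meas[OF this]
      show "{\<omega>\<in>space \<Omega>. hv \<omega> j < hv \<omega> i} \<in> sets \<Omega>" by measurable
    qed simp
    have c: "{\<omega>\<in>space \<Omega>. \<forall>i\<in>{..<length us}. hv \<omega> j \<le> hv \<omega> i} \<in> sets \<Omega>"
    proof (rule sets.sets_Collect_finite_All)
      fix i assume "i \<in> {..<length us}"
      then have "i < length us" by simp
      note [measurable] = hv_meas[OF this]
      show "{\<omega>\<in>space \<Omega>. hv \<omega> j \<le> hv \<omega> i} \<in> sets \<Omega>" by measurable
    qed simp
    have "{\<omega>\<in>space \<Omega>. P j \<omega>} = {\<omega>\<in>space \<Omega>. hv \<omega> j < \<top>} \<inter> {\<omega>\<in>space \<Omega>. \<forall>i\<in>{..<j}. hv \<omega> j < hv \<omega> i}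
        \<inter> {\<omega>\<in>space \<Omega>. \<forall>i\<in>{..<length us}. hv \<omega> j \<le> hv \<omega> i}"
      unfolding P_def by auto
    then show "{\<omega>\<in>space \<Omega>. P j \<omega>} \<in> sets \<Omega>" using a b c by simp
  qed
  define E1 where "E1 = {\<omega>\<in>space \<Omega>. T v \<omega> < \<top> \<and> (\<forall>w\<in>{..<n}-{v}. T v \<omega> < T w \<omega>)}"
  define E2 where "E2 = {\<omega>\<in>space \<Omega>. T v \<omega> < \<top> \<and> (\<forall>w\<in>{..<n}. T v \<omega> \<le> T w \<omega>)}"
  have E2s: "E2 \<in> sets \<Omega>"
  proof -
    have A2: "{\<omega>\<in>space \<Omega>. \<forall>w\<in>{..<n}. T v \<omega> \<le> T w \<omega>} \<in> sets \<Omega>"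
    proof (rule sets.sets_Collect_finite_All)
      fix w show "{\<omega>\<in>space \<Omega>. T v \<omega> \<le> T w \<omega>} \<in> sets \<Omega>" by measurable
    qed simp
    have A0: "{\<omega>\<in>space \<Omega>. T v \<omega> < \<top>} \<in> sets \<Omega>" by measurable
    have "E2 = {\<omega>\<in>space \<Omega>. T v \<omega> < \<top>} \<inter> {\<omega>\<in>space \<Omega>. \<forall>w\<in>{..<n}. T v \<omega> \<le> T w \<omega>}"
      unfolding E2_def by auto
    then show ?thesis using A0 A2 by simp
  qed
  have s1: "E1 \<subseteq> Ev"
  proof
    fix \<omega> assume "\<omega> \<in> E1"
    then have w: "\<omega> \<in> space \<Omega>" "T v \<omega> < \<top>" "\<forall>w\<in>{..<n}-{v}. T v \<omega> < T w \<omega>" unfolding E1_def by auto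
    from E_lower[OF v w] show "\<omega> \<in> Ev"
      unfolding Ev_def ds_run_char hval_eq vi_def using w(1) by auto
  qed
  have s2: "Ev \<subseteq> E2"
  proof
    fix \<omega> assume "\<omega> \<in> Ev"
    then obtain j where j: "j < length us" "vi j = v" "hv \<omega> j < \<top>" "\<forall>i<length us. hv \<omega> j \<le> hv \<omega> i"
      and sp: "\<omega> \<in> space \<Omega>"
      unfolding Ev_def ds_run_char hval_eq vi_def by auto
    from E_upper[OF v j] sp show "\<omega> \<in> E2" unfolding E2_def by auto
  qed
  have "measure \<Omega> E1 \<le> measure \<Omega> Ev" by (rule \<Omega>.finite_measure_mono[OF s1 Evs])
  moreover have "measure \<Omega> Ev \<le> measure \<Omega> E2" by (rule \<Omega>.finite_measure_mono[OF s2 E2s])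
  moreover have "measure \<Omega> E1 = lam v / (\<Sum>u<n. lam u)" unfolding E1_def by (rule E_values(1)[OF v])
  moreover have "measure \<Omega> E2 = lam v / (\<Sum>u<n. lam u)" unfolding E2_def by (rule E_values(2)[OF v])
  ultimately show ?thesis unfolding Ev_def by simp
qed

end

lemma class_G0: "in_class_G G \<Longrightarrow> G 0 = 0"
  unfolding in_class_G_def by auto

theorem mainTheorem2:
  fixes G :: "real \<Rightarrow> real"
    and M :: "'w measure" and X :: "real \<Rightarrow> 'w \<Rightarrow> ennreal"
    and n :: nat and us :: "(nat \<times> real) list" and v :: nat
  assumes "in_class_G G"
    and "has_laplace_exponent M X G"
    and "\<forall>u \<in> set us. fst u < n \<and> snd u > 0"
    and "v < n"
  shows "measure (sampler_space n (length us))
           {\<omega> \<in> space (sampler_space n (length us)).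
              fst (ds_run (levy_level M X) (fst \<omega>) (snd \<omega>) us) = Some v}
         = G (stream_vec us v) / (\<Sum>u<n. G (stream_vec us u))"
proof -
  interpret samp G M X n us
  proof
    show "has_laplace_exponent M X G" by fact
    show "\<forall>u\<in>set us. fst u < n \<and> snd u > 0" by fact
    show "0 < n" using assms(4) by simp
    show "G 0 = 0" using class_G0[OF assms(1)] .
  qed
  show ?thesis using main[OF assms(4)] unfolding lam_def .
qed


end
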